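(* Let $\widetilde A=\sum_{r=p}^qT^r\otimes a_r$ ($p\le q$ integers, $a_r\in\mathbb{C}_d$) be a Fredholm banded block-Toeplitz operator on $\ell^2(\mathbb{N})\otimes\mathbb{C}^d$, and for $\kappa\in\mathbb{Z}$ let $\widetilde A_\kappa:=\sum_{r=p}^qT^{\,r-p-\kappa}\otimes a_r$. Then for every $\kappa$, $\mathrm{Ker}\,\widetilde A_\kappa+T^\dagger\mathrm{Ker}\,\widetilde A_\kappa\subseteq\mathrm{Ker}\,\widetilde A_{\kappa-1}$; choose any subspace $\mathcal{D}_\kappa$ with $\mathrm{Ker}\,\widetilde A_{\kappa-1}=(\mathrm{Ker}\,\widetilde A_\kappa+T^\dagger\mathrm{Ker}\,\widetilde A_\kappa)\oplus\mathcal{D}_\kappa$ (algebraic direct sum) and set $s_\kappa:=\dim\mathcal{D}_\kappa$. Then: (1) $\mathrm{Ker}\,\widetilde A_\kappa=\{0\}$ for all $\kappa\ge q-p$; (2) for $\kappa<q-p$, $\mathrm{Ker}\,\widetilde A_\kappa$ is the direct sum $\bigoplus_{\kappa'=\kappa+1}^{q-p}\bigoplus_{r=0}^{\kappa'-\kappa-1}(T^\dagger)^r\mathcal{D}_{\kappa'}$, so $\dim\mathrm{Ker}\,\widetilde A_\kappa=\sum_{\kappa'=\kappa+1}^{q-p}(\kappa'-\kappa)s_{\kappa'}$; (3) $s_\kappa=0$ whenever $\kappa>q-p$ or $\kappa<0$; (4) $\sum_{\kappa=0}^{q-p}s_\kappa=d$.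
   Context: $\mathbb{N}=\{0,1,2,\dots\}$; $T$ is the shift on $\ell^2(\mathbb{N})$ with $T|j\rangle=|j-1\rangle$ for $j\ge1$ and $T|0\rangle=0$ (so $TT^\dagger=I$, $T^\dagger T=I-|0\rangle\langle0|$), acting as $T\otimes I_d$ on $\ell^2(\mathbb{N})\otimes\mathbb{C}^d$; $T^r:=(T^\dagger)^{|r|}$ for $r<0$. Equivalently $\widetilde A_{-p}=\widetilde A$, $\widetilde A_{\kappa-1}=T\widetilde A_\kappa$ and $\widetilde A_{\kappa+1}=\widetilde A_\kappa T^\dagger$. A Fredholm operator has closed range and finite-dimensional kernel and cokernel. *)

theory Defs
  imports "HOL-Analysis.Analysis" "HOL-Library.Function_Algebras"
begin

text \<open>Elements of l2(N) tensor C^d are modelled as sequences x :: nat => complex^'d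
  (the index type 'd is finite with CARD('d) = d); l2 is the set of square-summable ones.\<close>

type_synonym 'd seq = "nat \<Rightarrow> complex^'d"

definition l2 :: "'d::finite seq set" where
  "l2 = {x. summable (\<lambda>j. (norm (x j))\<^sup>2)}"

definition l2norm :: "'d::finite seq \<Rightarrow> real" where
  "l2norm x = sqrt (\<Sum>j. (norm (x j))\<^sup>2)"

definition scaleS :: "complex \<Rightarrow> 'd::finite seq \<Rightarrow> 'd seq" where
  "scaleS c x = (\<lambda>j. c *s x j)"

abbreviation cspan :: "'d::finite seq set \<Rightarrow> 'd seq set" where
  "cspan \<equiv> module.span scaleS"

abbreviation csubspace :: "'d::finite seq set \<Rightarrow> bool" where
  "csubspace \<equiv> module.subspace scaleS"

abbreviation cdim :: "'d::finite seq set \<Rightarrow> nat" where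
  "cdim \<equiv> vector_space.dim scaleS"

text \<open>Shift powers: T e_j = e_(j-1), T e_0 = 0, so (T x)_i = x_(i+1);
  T^r = (T^dagger)^|r| for r < 0, with (T^dagger x)_i = x_(i-1), (T^dagger x)_0 = 0.\<close>

definition Tpow :: "int \<Rightarrow> 'd::finite seq \<Rightarrow> 'd seq" where
  "Tpow r x = (if r \<ge> 0 then (\<lambda>j. x (j + nat r))
               else (\<lambda>j. if nat (- r) \<le> j then x (j - nat (- r)) else 0))"

definition Akappa :: "int \<Rightarrow> int \<Rightarrow> (int \<Rightarrow> complex^'d^'d) \<Rightarrow> int \<Rightarrow> 'd::finite seq \<Rightarrow> 'd seq" where
  "Akappa p q a \<kappa> x = (\<lambda>j. \<Sum>r\<in>{p..q}. a r *v Tpow (r - p - \<kappa>) x j)"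

definition Ker :: "('d::finite seq \<Rightarrow> 'd seq) \<Rightarrow> 'd seq set" where
  "Ker A = {x \<in> l2. A x = 0}"

definition setplus :: "'d::finite seq set \<Rightarrow> 'd seq set \<Rightarrow> 'd seq set" where
  "setplus U V = {u + v | u v. u \<in> U \<and> v \<in> V}"

text \<open>Fredholm on l2: closed range (in the l2 norm), finite-dimensional kernel,
  finite-dimensional cokernel (range has a finite-dimensional algebraic complement).\<close>

definition fredholm_l2 :: "('d::finite seq \<Rightarrow> 'd seq) \<Rightarrow> bool" where
  "fredholm_l2 A \<longleftrightarrow>
     A ` l2 \<subseteq> l2 \<and>
     (\<forall>y z. (\<forall>n. y n \<in> A ` l2) \<and> z \<in> l2 \<and> (\<lambda>n. l2norm (y n - z)) \<longlonglongrightarrow> 0 \<longrightarrow> z \<in> A ` l2) \<and>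
     (\<exists>B. finite B \<and> Ker A \<subseteq> cspan B) \<and>
     (\<exists>B. finite B \<and> B \<subseteq> l2 \<and> l2 \<subseteq> setplus (A ` l2) (cspan B))"

definition is_direct_sum :: "'i set \<Rightarrow> ('i \<Rightarrow> 'd::finite seq set) \<Rightarrow> 'd seq set \<Rightarrow> bool" where
  "is_direct_sum I U V \<longleftrightarrow>
     V = {(\<Sum>i\<in>I. f i) | f. \<forall>i\<in>I. f i \<in> U i} \<and>
     (\<forall>f. (\<forall>i\<in>I. f i \<in> U i) \<and> (\<Sum>i\<in>I. f i) = 0 \<longrightarrow> (\<forall>i\<in>I. f i = 0))"

end

theory Submission
  imports Defs
begin

interpretation S: vector_space scaleS
  by unfold_locales (auto simp: scaleS_def fun_eq_iff vector_add_ldistrib vector_sadd_rdistrib)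

lemma scaleS_apply[simp]: "scaleS c x j = c *s x j" by (simp add: scaleS_def)

lemma Tpow_apply: "Tpow s x j = (if s \<ge> 0 then x (j + nat s) else if nat (-s) \<le> j then x (j - nat (-s)) else 0)"
  by (simp add: Tpow_def)

lemma Tpow_0[simp]: "Tpow 0 x = x" by (simp add: Tpow_def)
lemma T1_apply[simp]: "Tpow 1 x j = x (Suc j)" by (simp add: Tpow_def)
lemma Td_apply: "Tpow (-1) x j = (if j = 0 then 0 else x (j - 1))" by (simp add: Tpow_def)

lemma int_cases_sign: obtains n where "s = int n" | n where "s = - int (Suc n)"
  by (metis int_cases)

lemma nat_aux1[simp]: "nat (int n + 1) = Suc n" by simp
lemma nat_aux2[simp]: "nat (int n - 1) = n - 1" by simp

lemma Tpow_Td: "Tpow s (Tpow (-1) x) = Tpow (s - 1) x"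
  by (rule ext, cases s rule: int_cases_sign) (auto simp: Tpow_apply Td_apply nat_add_distrib)

lemma T_Tpow: "Tpow 1 (Tpow s x) = Tpow (s + 1) x"
  by (rule ext, cases s rule: int_cases_sign) (auto simp: Tpow_apply Suc_diff_le)

lemma Tpow_T: "s \<ge> 0 \<Longrightarrow> Tpow s (Tpow 1 x) = Tpow (s + 1) x"
  by (rule ext) (auto simp: Tpow_apply nat_add_distrib)

lemma Td_Tpow: "s \<le> 0 \<Longrightarrow> Tpow (-1) (Tpow s x) = Tpow (s - 1) x"
  by (rule ext, cases s rule: int_cases_sign) (auto simp: Tpow_apply Td_apply nat_add_distrib)

lemma Tpow_add: "Tpow s (x + y) = Tpow s x + Tpow s y"
  by (rule ext) (auto simp: Tpow_apply)
lemma Tpow_scale: "Tpow s (scaleS c x) = scaleS c (Tpow s x)"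
  by (rule ext) (auto simp: Tpow_apply)
lemma Tpow_zero[simp]: "Tpow s 0 = 0"
  by (rule ext) (auto simp: Tpow_apply)

lemma linear_Tpow: "Vector_Spaces.linear scaleS scaleS (Tpow s)"
  by (auto simp: Vector_Spaces.linear_iff Tpow_add Tpow_scale S.vector_space_axioms)

lemma T_Td[simp]: "Tpow 1 (Tpow (-1) x) = x"
  using T_Tpow[of "-1" x] by simp

lemma Td_inj: "Tpow (-1) x = Tpow (-1) y \<Longrightarrow> x = y"
  by (metis T_Td)

lemma norm_smult_vec: "norm (c *s (v::complex^'d::finite)) = norm c * norm v"
proof -
  have "norm (c *s v) = sqrt ((norm c)^2 * (\<Sum>i\<in>UNIV. (norm (v$i))^2))"
    by (simp add: norm_vec_def L2_set_def norm_mult power_mult_distrib sum_distrib_left)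
  also have "\<dots> = norm c * norm v"
    by (simp add: norm_vec_def L2_set_def real_sqrt_mult)
  finally show ?thesis .
qed

lemma l2_zero[simp]: "0 \<in> l2" by (simp add: l2_def)

lemma l2_add: assumes "x \<in> l2" "y \<in> l2" shows "x + y \<in> l2"
proof -
  have "summable (\<lambda>j. 2 * (norm (x j))\<^sup>2 + 2 * (norm (y j))\<^sup>2)"
    using assms by (auto simp: l2_def intro!: summable_add summable_mult)
  moreover have "norm ((norm ((x + y) j))\<^sup>2) \<le> 2 * (norm (x j))\<^sup>2 + 2 * (norm (y j))\<^sup>2" for j
  proof -
    have "norm ((x + y) j) \<le> norm (x j) + norm (y j)" by (simp add: norm_triangle_ineq)
    then have "(norm ((x + y) j))\<^sup>2 \<le> (norm (x j) + norm (y j))\<^sup>2"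
      by (simp add: power_mono)
    also have "\<dots> \<le> 2 * (norm (x j))\<^sup>2 + 2 * (norm (y j))\<^sup>2"
      by (smt (verit) sum_squares_bound power2_sum)
    finally show ?thesis by simp
  qed
  ultimately show ?thesis unfolding l2_def
    by (auto intro: summable_comparison_test')
qed

lemma l2_scale: assumes "x \<in> l2" shows "scaleS c x \<in> l2"
  using assms by (auto simp: l2_def norm_smult_vec power_mult_distrib intro!: summable_mult)

lemma l2_neg: "x \<in> l2 \<Longrightarrow> - x \<in> l2"
  by (simp add: l2_def)

lemma l2_diff: "x \<in> l2 \<Longrightarrow> y \<in> l2 \<Longrightarrow> x - y \<in> l2"
  by (metis diff_conv_add_uminus l2_add l2_neg)

lemma l2_subspace: "csubspace l2"
  by (auto simp: S.subspace_def l2_add l2_scale)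

lemma l2_sum: "(\<And>i. i \<in> I \<Longrightarrow> f i \<in> l2) \<Longrightarrow> sum f I \<in> l2"
  using S.subspace_sum[OF l2_subspace] by blast

lemma l2_Tpow: assumes "x \<in> l2" shows "Tpow s x \<in> l2"
proof (cases "s \<ge> 0")
  case True
  then show ?thesis using assms summable_iff_shift[of "\<lambda>j. (norm (x j))^2" "nat s"]
    by (simp add: l2_def Tpow_def)
next
  case False
  define k where "k = nat (-s)"
  define g where "g = (\<lambda>j. (norm (Tpow s x j))\<^sup>2)"
  have "g (n + k) = (norm (x n))\<^sup>2" for n using False by (simp add: g_def Tpow_def k_def)
  then have "summable (\<lambda>n. g (n + k))" using assms by (simp add: l2_def)
  then have "summable g" by (subst summable_iff_shift[symmetric, of g k])
  then show ?thesis by (simp add: g_def l2_def)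
qed


abbreviation "AK p q a \<kappa> \<equiv> Akappa p q a \<kappa>"

lemma Akappa_apply: "Akappa p q a \<kappa> x j = (\<Sum>r\<in>{p..q}. a r *v Tpow (r - p - \<kappa>) x j)"
  by (simp add: Akappa_def)

lemma A1: "Akappa p q a \<kappa> (Tpow (-1) x) = Akappa p q a (\<kappa> + 1) x"
  by (rule ext) (simp add: Akappa_apply Tpow_Td algebra_simps)

lemma A2: "Tpow 1 (Akappa p q a \<kappa> x) = Akappa p q a (\<kappa> - 1) x"
proof (rule ext)
  fix j
  have "Tpow s x (Suc j) = Tpow (s + 1) x j" for s
    using fun_cong[OF T_Tpow[of s x], of j] by simp
  then show "Tpow 1 (Akappa p q a \<kappa> x) j = Akappa p q a (\<kappa> - 1) x j"
    by (simp add: Akappa_apply algebra_simps)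
qed

lemma A3: assumes "\<kappa> \<le> 0" shows "Akappa p q a \<kappa> (Tpow 1 x) = Akappa p q a (\<kappa> - 1) x"
proof (rule ext)
  fix j
  have "Tpow (r - p - \<kappa>) (Tpow 1 x) j = Tpow (r - p - (\<kappa> - 1)) x j" if "r \<in> {p..q}" for r
    using that assms Tpow_T[of "r - p - \<kappa>" x] by (auto simp: algebra_simps)
  then show "Akappa p q a \<kappa> (Tpow 1 x) j = Akappa p q a (\<kappa> - 1) x j"
    by (simp add: Akappa_apply)
qed

lemma A4: assumes "\<kappa> \<ge> q - p" shows "Tpow (-1) (Akappa p q a \<kappa> x) = Akappa p q a (\<kappa> + 1) x"
proof (rule ext)
  fix j
  have "Tpow (-1) (Tpow (r - p - \<kappa>) x) j = Tpow (r - p - (\<kappa> + 1)) x j" if "r \<in> {p..q}" for r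
    using that assms Td_Tpow[of "r - p - \<kappa>" x] by (auto simp: algebra_simps)
  then have "Tpow (r - p - (\<kappa> + 1)) x j = (if j = 0 then 0 else Tpow (r - p - \<kappa>) x (j - 1))"
    if "r \<in> {p..q}" for r using that by (simp add: Td_apply)
  then show "Tpow (-1) (Akappa p q a \<kappa> x) j = Akappa p q a (\<kappa> + 1) x j"
    by (simp add: Akappa_apply Td_apply)
qed

lemma A5: assumes "m \<ge> 0" shows "Tpow m (Akappa p q a 0 x) = Akappa p q a (- m) x"
proof (rule ext)
  fix j
  have "x (j + nat m + nat (r - p)) = x (j + nat (r - p + m))" if "r \<in> {p..q}" for r
    using that assms by (simp add: nat_add_distrib ac_simps)
  then show "Tpow m (Akappa p q a 0 x) j = Akappa p q a (- m) x j"
    using assms by (simp add: Akappa_apply Tpow_apply ac_simps)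
qed

lemma Akappa_add: "Akappa p q a \<kappa> (x + y) = Akappa p q a \<kappa> x + Akappa p q a \<kappa> y"
  by (rule ext) (simp add: Akappa_apply Tpow_add matrix_vector_right_distrib sum.distrib)

lemma Akappa_scale: "Akappa p q a \<kappa> (scaleS c x) = scaleS c (Akappa p q a \<kappa> x)"
  by (rule ext) (simp add: Akappa_apply Tpow_scale[unfolded scaleS_def] vector_scalar_commute scaleS_def vec.scale_sum_right)

lemma linear_Akappa: "Vector_Spaces.linear scaleS scaleS (Akappa p q a \<kappa>)"
  by (auto simp: Vector_Spaces.linear_iff Akappa_add Akappa_scale S.vector_space_axioms)

interpretation SP: vector_space_pair scaleS scaleS ..

lemma Ker_subspace: "Vector_Spaces.linear scaleS scaleS f \<Longrightarrow> csubspace (Ker f)"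
  unfolding Ker_def S.subspace_def
  by (auto simp: l2_add l2_scale SP.linear_add SP.linear_scale SP.linear_0)

lemma KerA_subspace: "csubspace (Ker (Akappa p q a \<kappa>))"
  by (rule Ker_subspace[OF linear_Akappa])

lemma K1: "Ker (Akappa p q a (\<kappa> + 1)) \<subseteq> Ker (Akappa p q a \<kappa>)"
proof
  fix x assume x: "x \<in> Ker (Akappa p q a (\<kappa> + 1))"
  have "Akappa p q a \<kappa> x = Tpow 1 (Akappa p q a (\<kappa> + 1) x)" using A2[of p q a "\<kappa> + 1"] by simp
  also have "\<dots> = 0" using x by (simp add: Ker_def)
  finally show "x \<in> Ker (Akappa p q a \<kappa>)" using x by (simp add: Ker_def)
qed

lemma K1': "\<kappa> \<le> \<kappa>' \<Longrightarrow> Ker (Akappa p q a \<kappa>') \<subseteq> Ker (Akappa p q a \<kappa>)"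
proof (induction \<kappa>' rule: int_ge_induct)
  case base then show ?case by simp
next
  case (step i) then show ?case using K1[of p q a i] by auto
qed

lemma K2: "x \<in> l2 \<Longrightarrow> (Tpow (-1) x \<in> Ker (Akappa p q a \<kappa>) \<longleftrightarrow> x \<in> Ker (Akappa p q a (\<kappa> + 1)))"
  unfolding Ker_def by (auto simp: A1 l2_Tpow)

lemma K3: "\<kappa> \<ge> q - p \<Longrightarrow> Ker (Akappa p q a \<kappa>) \<subseteq> Ker (Akappa p q a (\<kappa> + 1))"
proof
  fix x assume k: "q - p \<le> \<kappa>" and x: "x \<in> Ker (Akappa p q a \<kappa>)"
  have "Akappa p q a (\<kappa> + 1) x = Tpow (-1) (Akappa p q a \<kappa> x)" by (rule A4[OF k, symmetric])
  also have "\<dots> = 0" using x by (simp add: Ker_def)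
  finally show "x \<in> Ker (Akappa p q a (\<kappa> + 1))" using x by (simp add: Ker_def)
qed

lemma Ker_l2: "x \<in> Ker f \<Longrightarrow> x \<in> l2" by (simp add: Ker_def)


definition fd :: "'d::finite seq set \<Rightarrow> bool" where
  "fd V \<longleftrightarrow> (\<exists>B. finite B \<and> V \<subseteq> cspan B)"

lemma fd_subset: "U \<subseteq> V \<Longrightarrow> fd V \<Longrightarrow> fd U"
  unfolding fd_def by blast

lemma fd_basis:
  assumes "fd V"
  obtains B where "finite B" "B \<subseteq> V" "S.independent B" "V \<subseteq> cspan B" "card B = cdim V"
proof -
  obtain B0 where B0: "finite B0" "V \<subseteq> cspan B0" using assms fd_def by blast
  obtain B where B: "B \<subseteq> V" "S.independent B" "V \<subseteq> cspan B" "card B = cdim V"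
    using S.basis_exists by blast
  have "finite B" using S.independent_span_bound[OF B0(1) B(2)] B(1) B0(2) by blast
  then show ?thesis using that B by blast
qed

lemma fd_span: "finite B \<Longrightarrow> fd (cspan B)"
  unfolding fd_def by blast

lemma span_disjoint_parts:
  assumes fin: "finite B" and ind: "S.independent B" and X: "X \<subseteq> B"
    and x1: "x \<in> cspan X" and x2: "x \<in> cspan (B - X)"
  shows "x = 0"
proof -
  have fX: "finite X" "finite (B - X)" using fin X finite_subset by auto
  obtain u1 where u1: "(\<Sum>v\<in>X. scaleS (u1 v) v) = x" using x1 S.span_finite[OF fX(1)] by auto
  obtain u2 where u2: "(\<Sum>v\<in>B - X. scaleS (u2 v) v) = x" using x2 S.span_finite[OF fX(2)] by auto
  define u where "u v = (if v \<in> X then u1 v else - u2 v)" for v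
  have "(\<Sum>v\<in>B. scaleS (u v) v) = (\<Sum>v\<in>X. scaleS (u v) v) + (\<Sum>v\<in>B - X. scaleS (u v) v)"
    by (simp add: sum.subset_diff[OF X fin] add.commute)
  also have "\<dots> = x + - x"
  proof -
    have "(\<Sum>v\<in>X. scaleS (u v) v) = (\<Sum>v\<in>X. scaleS (u1 v) v)"
      by (rule sum.cong) (auto simp: u_def)
    moreover have "(\<Sum>v\<in>B - X. scaleS (u v) v) = (\<Sum>v\<in>B - X. - scaleS (u2 v) v)"
      by (rule sum.cong) (auto simp: u_def S.scale_minus_left)
    ultimately show ?thesis using u1 u2 by (simp only: sum_negf)
  qed
  finally have z: "(\<Sum>v\<in>B. scaleS (u v) v) = 0" by simp
  have "u v = 0" if "v \<in> X" for v using S.independentD[OF ind fin subset_refl z] that X by blast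
  then have "u1 v = 0" if "v \<in> X" for v using that by (simp add: u_def)
  then show ?thesis using u1 by simp
qed

lemma setplus_subspace: "csubspace U \<Longrightarrow> csubspace V \<Longrightarrow> csubspace (setplus U V)"
  unfolding setplus_def by (rule S.subspace_sums)

lemma setplus_sub: "csubspace W \<Longrightarrow> U \<subseteq> W \<Longrightarrow> V \<subseteq> W \<Longrightarrow> setplus U V \<subseteq> W"
  unfolding setplus_def by (auto intro: S.subspace_add)

lemma DS:
  assumes U: "csubspace U" and V: "csubspace V" and fU: "fd U" and fV: "fd V"
    and I: "U \<inter> V \<subseteq> {0}"
  shows "fd (setplus U V) \<and> cdim (setplus U V) = cdim U + cdim V"
proof -
  obtain BU where BU: "finite BU" "BU \<subseteq> U" "S.independent BU" "U \<subseteq> cspan BU" "card BU = cdim U"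
    using fd_basis[OF fU] by blast
  obtain BV where BV: "finite BV" "BV \<subseteq> V" "S.independent BV" "V \<subseteq> cspan BV" "card BV = cdim V"
    using fd_basis[OF fV] by blast
  have disj: "BU \<inter> BV = {}"
  proof (rule ccontr)
    assume "BU \<inter> BV \<noteq> {}"
    then obtain v where "v \<in> BU" "v \<in> BV" by blast
    then have "v = 0" using I BU(2) BV(2) by blast
    then show False using \<open>v \<in> BU\<close> BU(3) S.dependent_zero by blast
  qed
  have spU: "cspan BU = U" using BU U by (simp add: S.span_subspace)
  have spV: "cspan BV = V" using BV V by (simp add: S.span_subspace)
  have sp: "cspan (BU \<union> BV) = setplus U V"
    by (simp add: S.span_Un spU spV setplus_def)
  have ind: "S.independent (BU \<union> BV)"
  proof (rule S.independent_if_scalars_zero)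
    show "finite (BU \<union> BV)" using BU BV by simp
    fix f x assume z: "(\<Sum>x\<in>BU \<union> BV. scaleS (f x) x) = 0" and x: "x \<in> BU \<union> BV"
    define su where "su = (\<Sum>x\<in>BU. scaleS (f x) x)"
    define sv where "sv = (\<Sum>x\<in>BV. scaleS (f x) x)"
    have "su + sv = (\<Sum>x\<in>BU \<union> BV. scaleS (f x) x)" unfolding su_def sv_def
      by (rule sum.union_disjoint[symmetric, OF BU(1) BV(1) disj])
    then have "su + sv = 0" using z by simp
    moreover have "su \<in> U" unfolding su_def using BU(2) U
      by (auto intro!: S.subspace_sum S.subspace_scale)
    moreover have "sv \<in> V" unfolding sv_def using BV(2) V
      by (auto intro!: S.subspace_sum S.subspace_scale)
    ultimately have suU: "su \<in> U" and svV: "sv \<in> V" and e: "su + sv = 0" by simp_all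
    from e have "su = - sv" by (simp add: eq_neg_iff_add_eq_0)
    then have "su \<in> V" using S.subspace_neg[OF V svV] by simp
    then have su0: "su = 0" using I suU by auto
    with \<open>su + sv = 0\<close> have sv0: "sv = 0" by simp
    show "f x = 0"
    proof (cases "x \<in> BU")
      case True
      show ?thesis by (rule S.independentD[OF BU(3) BU(1) subset_refl su0[unfolded su_def] True])
    next
      case False
      then have "x \<in> BV" using x by simp
      show ?thesis by (rule S.independentD[OF BV(3) BV(1) subset_refl sv0[unfolded sv_def] \<open>x \<in> BV\<close>])
    qed
  qed
  have "cdim (setplus U V) = card (BU \<union> BV)"
    by (rule S.dim_eq_card[OF _ ind]) (metis sp S.span_eq_iff setplus_subspace[OF U V])
  also have "\<dots> = cdim U + cdim V" using card_Un_disjoint[OF BU(1) BV(1) disj] BU BV by simp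
  finally show ?thesis using sp fd_span[of "BU \<union> BV"] BU BV by simp
qed

lemma COMP:
  assumes W: "csubspace W" and V: "csubspace V" and WV: "W \<subseteq> V" and fV: "fd V"
  obtains C where "csubspace C" "C \<subseteq> V" "W \<inter> C \<subseteq> {0}" "setplus W C = V" "fd C"
proof -
  obtain BW where BW: "finite BW" "BW \<subseteq> W" "S.independent BW" "W \<subseteq> cspan BW" "card BW = cdim W"
    by (rule fd_basis[OF fd_subset[OF WV fV]])
  have BWV: "BW \<subseteq> V" using BW(2) WV by (rule order_trans)
  obtain B where B: "BW \<subseteq> B" "B \<subseteq> V" "S.independent B" "V \<subseteq> cspan B"
    by (rule S.maximal_independent_subset_extend[OF BWV BW(3)])
  obtain B0 where B0: "finite B0" "V \<subseteq> cspan B0" using fV fd_def by blast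
  have fB: "finite B" using S.independent_span_bound[OF B0(1) B(3)] B(2) B0(2) by blast
  define C where "C = cspan (B - BW)"
  have spW: "cspan BW = W" using BW W by (simp add: S.span_subspace)
  have "csubspace C" by (simp add: C_def)
  moreover have "C \<subseteq> V" unfolding C_def using B V by (meson Diff_subset S.span_minimal order_trans)
  moreover have "W \<inter> C \<subseteq> {0}"
    using span_disjoint_parts[OF fB B(3) B(1)] spW C_def by blast
  moreover have "setplus W C = V"
  proof
    show "setplus W C \<subseteq> V" using setplus_sub[OF V WV] \<open>C \<subseteq> V\<close> by blast
    have "cspan B = cspan (BW \<union> (B - BW))" using B(1) by (simp add: Un_absorb1)
    also have "\<dots> = setplus W C" by (simp only: S.span_Un spW C_def setplus_def)
    finally show "V \<subseteq> setplus W C" using B(4) by simp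
  qed
  moreover have "fd C" unfolding C_def using fB by (simp add: fd_span)
  ultimately show ?thesis using that by blast
qed

lemma INJ:
  assumes lin: "Vector_Spaces.linear scaleS scaleS f" and inj: "inj f"
    and V: "csubspace V" and fV: "fd V"
  shows "fd (f ` V) \<and> cdim (f ` V) = cdim V"
proof -
  obtain B where B: "finite B" "B \<subseteq> V" "S.independent B" "V \<subseteq> cspan B" "card B = cdim V"
    using fd_basis[OF fV] by blast
  have spB: "cspan B = V" using B V by (simp add: S.span_subspace)
  have sp: "cspan (f ` B) = f ` V" using SP.linear_span_image[OF lin] spB by simp
  have ind: "S.independent (f ` B)"
    using SP.linear_independent_injective_image[OF lin B(3)] inj by (simp add: inj_on_def)
  have e: "cspan (f ` V) = f ` V" using SP.linear_subspace_image[OF lin V] by (simp add: S.span_eq_iff)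
  have "cdim (f ` V) = card (f ` B)"
    by (rule S.dim_eq_card[OF _ ind]) (simp add: e sp)
  also have "\<dots> = card B" using inj by (simp add: card_image inj_on_def)
  finally show ?thesis using B sp fd_span[of "f ` B"] by simp
qed


interpretation SV: vector_space_pair scaleS "(*s) :: complex \<Rightarrow> complex^'e::finite \<Rightarrow> complex^'e" ..

lemma FIN:
  fixes \<phi> :: "'d::finite seq \<Rightarrow> complex^'e::finite"
  assumes V: "csubspace V" and lin: "Vector_Spaces.linear scaleS (*s) \<phi>"
    and fK: "fd {x\<in>V. \<phi> x = 0}"
  shows "fd V"
proof -
  have W: "vec.subspace (\<phi> ` V)" using SV.linear_subspace_image[OF lin V] .
  obtain BW where BW: "BW \<subseteq> \<phi> ` V" "vec.independent BW" "\<phi> ` V \<subseteq> vec.span BW" "card BW = vec.dim (\<phi> ` V)"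
    by (rule vec.basis_exists)
  have fBW: "finite BW" using vec.finiteI_independent[OF BW(2)] .
  define pre where "pre b = (SOME x. x \<in> V \<and> \<phi> x = b)" for b
  have pre: "pre b \<in> V \<and> \<phi> (pre b) = b" if "b \<in> BW" for b
  proof -
    have "\<exists>x. x \<in> V \<and> \<phi> x = b" using that BW(1) by blast
    then show ?thesis unfolding pre_def by (rule someI_ex[of "\<lambda>x. x \<in> V \<and> \<phi> x = b"])
  qed
  obtain BK where BK: "finite BK" "{x\<in>V. \<phi> x = 0} \<subseteq> cspan BK" using fK fd_def by blast
  have "V \<subseteq> cspan (BK \<union> pre ` BW)"
  proof
    fix x assume x: "x \<in> V"
    then have "\<phi> x \<in> vec.span BW" using BW(3) by blast
    then obtain c where c: "(\<Sum>b\<in>BW. c b *s b) = \<phi> x" using vec.span_finite[OF fBW] by auto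
    define y where "y = (\<Sum>b\<in>BW. scaleS (c b) (pre b))"
    have yV: "y \<in> V" unfolding y_def using pre V by (auto intro!: S.subspace_sum S.subspace_scale)
    have "\<phi> y = (\<Sum>b\<in>BW. c b *s \<phi> (pre b))"
      unfolding y_def by (simp add: SV.linear_sum[OF lin] SV.linear_scale[OF lin])
    also have "\<dots> = \<phi> x" using c pre by (auto intro!: sum.cong)
    finally have "\<phi> (x - y) = 0" by (simp add: SV.linear_diff[OF lin])
    then have "x - y \<in> cspan BK" using BK(2) x yV S.subspace_diff[OF V] by blast
    then have "x - y \<in> cspan (BK \<union> pre ` BW)" by (meson S.span_mono Un_upper1 subsetD)
    moreover have "y \<in> cspan (BK \<union> pre ` BW)" unfolding y_def
      by (rule S.span_sum, rule S.span_scale, rule S.span_base) auto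
    ultimately have "x - y + y \<in> cspan (BK \<union> pre ` BW)" by (rule S.span_add)
    then show "x \<in> cspan (BK \<union> pre ` BW)" by (simp only: diff_add_cancel)
  qed
  moreover have "finite (BK \<union> pre ` BW)" using BK(1) fBW by simp
  ultimately show ?thesis unfolding fd_def by blast
qed

lemma RN:
  fixes \<phi> :: "'d::finite seq \<Rightarrow> complex^'e::finite"
  assumes V: "csubspace V" and lin: "Vector_Spaces.linear scaleS (*s) \<phi>"
    and sur: "\<And>v. \<exists>x\<in>V. \<phi> x = v"
    and fK: "fd {x\<in>V. \<phi> x = 0}"
  shows "fd V \<and> cdim V = cdim {x\<in>V. \<phi> x = 0} + CARD('e)"
proof -
  define K where "K = {x\<in>V. \<phi> x = 0}"
  define w where "w i = (SOME x. x \<in> V \<and> \<phi> x = axis i 1)" for i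
  have w: "w i \<in> V \<and> \<phi> (w i) = axis i 1" for i
  proof -
    have "\<exists>x. x \<in> V \<and> \<phi> x = axis i 1" using sur by blast
    then show ?thesis unfolding w_def by (rule someI_ex[of "\<lambda>x. x \<in> V \<and> \<phi> x = axis i 1"])
  qed
  have injw: "inj w" by (rule injI) (metis w axis_eq_axis one_neq_zero)
  define W where "W = range w"
  have fW: "finite W" by (simp add: W_def)
  have key: "\<forall>v\<in>W. u v = 0" if z: "\<phi> (\<Sum>v\<in>W. scaleS (u v) v) = 0" for u
  proof -
    have "\<phi> (\<Sum>v\<in>W. scaleS (u v) v) = (\<Sum>v\<in>W. u v *s \<phi> v)"
      by (simp add: SV.linear_sum[OF lin] SV.linear_scale[OF lin])
    also have "\<dots> = (\<Sum>i\<in>UNIV. u (w i) *s \<phi> (w i))"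
      unfolding W_def by (subst sum.reindex[OF inj_on_subset[OF injw]]) auto
    also have "\<dots> = (\<Sum>i\<in>UNIV. u (w i) *s axis i 1)" using w by simp
    finally have e: "(\<Sum>i\<in>UNIV. u (w i) *s (axis i 1 :: complex^'e)) = 0" using z by simp
    have "u (w j) = 0" for j
    proof -
      have "(\<Sum>i\<in>UNIV. u (w i) *s (axis i 1 :: complex^'e)) $ j = (\<Sum>i\<in>UNIV. if j = i then u (w i) else 0)"
        by (simp add: sum_component axis_def if_distrib cong: if_cong)
      also have "\<dots> = u (w j)" by (simp add: sum.delta)
      finally have "(\<Sum>i\<in>UNIV. u (w i) *s (axis i 1 :: complex^'e)) $ j = u (w j)" .
      then show ?thesis using e by simp
    qed
    then show ?thesis by (simp add: W_def)
  qed
  have ind: "S.independent W"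
  proof (rule S.independent_if_scalars_zero[OF fW])
    fix f v assume z: "(\<Sum>x\<in>W. scaleS (f x) x) = 0" and v: "v \<in> W"
    have "\<phi> (\<Sum>x\<in>W. scaleS (f x) x) = 0" unfolding z by (rule SV.linear_0[OF lin])
    then have "\<forall>v\<in>W. f v = 0" by (rule key)
    then show "f v = 0" using v by blast
  qed
  have cW: "card W = CARD('e)" unfolding W_def by (rule card_image[OF injw])
  define C where "C = cspan W"
  have CV: "C \<subseteq> V" unfolding C_def by (rule S.span_minimal) (use w V in \<open>auto simp: W_def\<close>)
  have KV: "K \<subseteq> V" by (auto simp: K_def)
  have Keq: "K = V \<inter> {x. \<phi> x = 0}" by (auto simp: K_def)
  have Ksub: "csubspace K" unfolding Keq
    by (rule S.subspace_inter[OF V SV.linear_subspace_kernel[OF lin]])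
  have KC: "K \<inter> C \<subseteq> {0}"
  proof
    fix z assume "z \<in> K \<inter> C"
    then obtain u where u: "(\<Sum>v\<in>W. scaleS (u v) v) = z" "\<phi> z = 0"
      using S.span_finite[OF fW] by (auto simp: C_def K_def)
    then have "\<forall>v\<in>W. u v = 0" using key by auto
    then show "z \<in> {0}" using u by simp
  qed
  have VKC: "V = setplus K C"
  proof
    show "setplus K C \<subseteq> V" using setplus_sub[OF V KV CV] .
    show "V \<subseteq> setplus K C"
    proof
      fix x assume x: "x \<in> V"
      define y where "y = (\<Sum>i\<in>UNIV. scaleS ((\<phi> x) $ i) (w i))"
      have yC: "y \<in> C" unfolding y_def C_def W_def
        by (rule S.span_sum, rule S.span_scale, rule S.span_base) auto
      have "\<phi> y = (\<Sum>i\<in>UNIV. (\<phi> x) $ i *s \<phi> (w i))"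
        unfolding y_def by (simp add: SV.linear_sum[OF lin] SV.linear_scale[OF lin])
      also have "\<dots> = \<phi> x" using w by (simp add: basis_expansion)
      finally have "\<phi> (x - y) = 0" by (simp add: SV.linear_diff[OF lin])
      then have "x - y \<in> K" unfolding K_def using x yC CV S.subspace_diff[OF V] by blast
      then show "x \<in> setplus K C" unfolding setplus_def using yC by force
    qed
  qed
  have fC: "fd C" unfolding C_def using fW by (rule fd_span)
  have fK': "fd K" using fK K_def by simp
  have dC: "cdim C = CARD('e)" unfolding C_def using S.dim_span_eq_card_independent[OF ind] cW by simp
  have "fd (setplus K C) \<and> cdim (setplus K C) = cdim K + cdim C"
    by (rule DS[OF Ksub _ fK' fC KC]) (simp add: C_def)
  then have "fd V \<and> cdim V = cdim K + cdim C" by (simp only: VKC[symmetric])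
  then show ?thesis using dC unfolding K_def by simp
qed


lemma sum_app: "(sum f A) j = sum (\<lambda>a. f a j) A"
  by (induction A rule: infinite_finite_induct) auto

lemma GEN:
  fixes f :: "nat \<Rightarrow> 'd::finite seq"
  assumes fB: "finite B" and sp: "\<And>j. j < N \<Longrightarrow> f j \<in> cspan B" and N: "card B < N"
  shows "\<exists>c. (\<exists>j<N. c j \<noteq> 0) \<and> (\<Sum>j<N. scaleS (c j) (f j)) = 0"
proof (cases "inj_on f {..<N}")
  case False
  then obtain i j where ij: "i < N" "j < N" "i \<noteq> j" "f i = f j" unfolding inj_on_def by auto
  define c where "c k = (if k = i then 1 else if k = j then -1 else (0::complex))" for k
  have "(\<Sum>k<N. scaleS (c k) (f k)) = (\<Sum>k\<in>{i,j}. scaleS (c k) (f k))"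
    by (rule sum.mono_neutral_right) (auto simp: c_def ij)
  also have "\<dots> = 0" using ij by (simp add: c_def S.scale_minus_left)
  finally show ?thesis using ij by (intro exI[of _ c]) (auto simp: c_def)
next
  case True
  define F where "F = f ` {..<N}"
  have fF: "finite F" by (simp add: F_def)
  have cF: "card F = N" unfolding F_def using True by (simp add: card_image)
  have "\<not> S.independent F"
  proof
    assume "S.independent F"
    moreover have "F \<subseteq> cspan B" using sp by (auto simp: F_def)
    ultimately have "card F \<le> card B" using S.independent_span_bound[OF fB] by blast
    then show False using cF N by simp
  qed
  then obtain u where u: "\<exists>v\<in>F. u v \<noteq> 0" "(\<Sum>v\<in>F. scaleS (u v) v) = 0"
    using S.dependent_finite[OF fF] by blast
  have "(\<Sum>j<N. scaleS (u (f j)) (f j)) = (\<Sum>v\<in>F. scaleS (u v) v)"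
    unfolding F_def by (rule sum.reindex[OF True, symmetric, unfolded comp_def])
  then show ?thesis using u by (intro exI[of _ "\<lambda>j. u (f j)"]) (auto simp: F_def)
qed

lemma Tpow_neg_Suc: "Tpow (- int (Suc j)) y = Tpow (-1) (Tpow (- int j) y)"
proof -
  have "Tpow (- int (Suc j)) y = Tpow (- int j - 1) y" by (rule arg_cong[where f="\<lambda>s. Tpow s y"]) simp
  also have "\<dots> = Tpow (-1) (Tpow (- int j) y)" by (rule Td_Tpow[symmetric]) simp
  finally show ?thesis .
qed

lemma Tpow_comp_neg: "Tpow s (Tpow (- int m) x) = Tpow (s - int m) x"
proof (induction m arbitrary: s)
  case 0 then show ?case by simp
next
  case (Suc m)
  have "Tpow s (Tpow (- int (Suc m)) x) = Tpow (s - 1) (Tpow (- int m) x)"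
    by (simp only: Tpow_neg_Suc Tpow_Td)
  also have "\<dots> = Tpow (s - int (Suc m)) x" using Suc by (simp add: algebra_simps)
  finally show ?case .
qed

lemma Tpow_comp_pos: "Tpow (int n) (Tpow t x) = Tpow (int n + t) x"
proof (induction n)
  case 0 then show ?case by simp
next
  case (Suc n)
  have "Tpow (int (Suc n)) (Tpow t x) = Tpow (int n + 1) (Tpow t x)"
    by (rule arg_cong[where f="\<lambda>s. Tpow s (Tpow t x)"]) simp
  also have "\<dots> = Tpow 1 (Tpow (int n) (Tpow t x))"
    by (rule T_Tpow[symmetric])
  also have "\<dots> = Tpow (int (Suc n) + t) x" using Suc T_Tpow[of "int n + t" x] by (simp add: algebra_simps)
  finally show ?case .
qed

lemma Tpow_comp: "s \<ge> 0 \<or> t \<le> 0 \<Longrightarrow> Tpow s (Tpow t x) = Tpow (s + t) x"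
  by (metis Tpow_comp_neg Tpow_comp_pos diff_minus_eq_add minus_minus nonneg_int_cases
      neg_0_le_iff_le)

lemma A7: "Akappa p q a \<kappa> x = Akappa p q a 0 (Tpow (- \<kappa>) x)"
proof (rule ext)
  fix j
  have "Tpow (r - p) (Tpow (- \<kappa>) x) j = Tpow (r - p - \<kappa>) x j" if "r \<in> {p..q}" for r
    using that Tpow_comp[of "r - p" "- \<kappa>" x] by simp
  then show "Akappa p q a \<kappa> x j = Akappa p q a 0 (Tpow (- \<kappa>) x) j"
    by (simp add: Akappa_apply)
qed


lemma Tpow_neg_apply: "Tpow (- int j) y i = (if j \<le> i then y (i - j) else 0)"
  by (cases j) (auto simp: Tpow_apply)

locale setupA =
  fixes p q :: int and a :: "int \<Rightarrow> complex^'d^'d::finite"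
  assumes pq: "p \<le> q" and fred: "fredholm_l2 (Akappa p q a (-p))"
begin

abbreviation KK where "KK \<kappa> \<equiv> Ker (Akappa p q a \<kappa>)"

lemma K_const: "q - p \<le> \<kappa> \<Longrightarrow> KK \<kappa> = KK (q - p)"
proof (induction \<kappa> rule: int_ge_induct)
  case base then show ?case by simp
next
  case (step i)
  then show ?case using K1[where p=p and q=q and a=a and \<kappa>=i] K3[where p=p and q=q and a=a and \<kappa>=i] by auto
qed

lemma Kn_sub: "KK (q - p) \<subseteq> KK \<kappa>"
proof (cases "\<kappa> \<le> q - p")
  case True then show ?thesis by (rule K1')
next
  case False then show ?thesis using K_const[of \<kappa>] by simp
qed

lemma Kn_Td: "x \<in> KK (q - p) \<Longrightarrow> Tpow (-1) x \<in> KK (q - p)"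
  using K2[of x p q a "q - p"] K_const[of "q - p + 1"] Ker_l2[of x] by simp

lemma Kn_Tdpow: "y \<in> KK (q - p) \<Longrightarrow> Tpow (- int j) y \<in> KK (q - p)"
proof (induction j)
  case 0 then show ?case by simp
next
  case (Suc j) then show ?case by (simp only: Tpow_neg_Suc) (rule Kn_Td, simp)
qed

lemma fred_ker: obtains B where "finite B" "KK (-p) \<subseteq> cspan B"
  using fred unfolding fredholm_l2_def by blast

lemma fred_coker: obtains B where "finite B" "B \<subseteq> l2" "l2 \<subseteq> setplus (Akappa p q a (-p) ` l2) (cspan B)"
  using fred unfolding fredholm_l2_def by blast

lemma Kn_zero: "KK (q - p) = {0}"
proof (rule ccontr)
  assume "KK (q - p) \<noteq> {0}"
  moreover have "0 \<in> KK (q - p)" using S.subspace_0[OF KerA_subspace] by blast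
  ultimately obtain y where yK: "y \<in> KK (q - p)" and y0: "y \<noteq> 0" by blast
  obtain B where B: "finite B" "KK (-p) \<subseteq> cspan B" by (rule fred_ker)
  define N where "N = Suc (card B)"
  define f where "f j = Tpow (- int j) y" for j
  have fB: "f j \<in> cspan B" for j
    using Kn_Tdpow[OF yK, of j] Kn_sub[of "-p"] B(2) by (auto simp: f_def)
  have "\<exists>c. (\<exists>j<N. c j \<noteq> 0) \<and> (\<Sum>j<N. scaleS (c j) (f j)) = 0"
    by (rule GEN[OF B(1)]) (auto simp: fB N_def)
  then obtain c where c: "\<exists>j<N. c j \<noteq> 0" "(\<Sum>j<N. scaleS (c j) (f j)) = 0" by blast
  obtain i where "y i \<noteq> 0" using y0 by (auto simp: fun_eq_iff)
  define j0 where "j0 = (LEAST i. y i \<noteq> 0)"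
  have yj0: "y j0 \<noteq> 0" unfolding j0_def by (rule LeastI) fact
  have ylow: "y i = 0" if "i < j0" for i using that not_less_Least unfolding j0_def by blast
  define J where "J = (LEAST j. j < N \<and> c j \<noteq> 0)"
  have J: "J < N \<and> c J \<noteq> 0" using c(1) unfolding J_def by (metis (mono_tags, lifting) LeastI)
  have clow: "c j = 0" if "j < J" "j < N" for j using that not_less_Least unfolding J_def by blast
  have trm: "c j *s f j (j0 + J) = (if j = J then c J *s y j0 else 0)" if "j < N" for j
  proof (cases "j < J")
    case True then show ?thesis using clow that by simp
  next
    case False
    show ?thesis
    proof (cases "j = J")
      case True then show ?thesis by (simp add: f_def Tpow_neg_apply)
    next
      case False
      with \<open>\<not> j < J\<close> have "J < j" by simp
      then have "f j (j0 + J) = 0" using ylow by (auto simp: f_def Tpow_neg_apply)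
      then show ?thesis using False by simp
    qed
  qed
  have "(\<Sum>j<N. scaleS (c j) (f j)) (j0 + J) = (\<Sum>j<N. c j *s f j (j0 + J))"
    by (simp add: sum_app)
  also have "\<dots> = (\<Sum>j<N. if j = J then c J *s y j0 else 0)"
    by (rule sum.cong) (simp_all add: trm)
  also have "\<dots> = c J *s y j0" using J by (simp add: sum.delta)
  finally have "c J *s y j0 = 0" using c(2) by simp
  then show False using J yj0 by simp
qed

lemma part1: "q - p \<le> \<kappa> \<Longrightarrow> KK \<kappa> = {0}"
  using K_const Kn_zero by simp

end


definition del :: "nat \<Rightarrow> complex^'d \<Rightarrow> 'd::finite seq" where
  "del j u = (\<lambda>i. if i = j then u else 0)"

lemma del_l2: "del j u \<in> l2"
proof -
  have "(\<lambda>i. (norm (del j u i))\<^sup>2) = (\<lambda>i. if i = j then (norm u)\<^sup>2 else 0)"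
    by (auto simp: del_def)
  then show ?thesis unfolding l2_def by simp
qed

lemma greatest_aux:
  fixes c :: "nat \<Rightarrow> 'a::zero"
  assumes "\<exists>j<N. c j \<noteq> 0"
  shows "(GREATEST j. j < N \<and> c j \<noteq> 0) < N \<and> c (GREATEST j. j < N \<and> c j \<noteq> 0) \<noteq> 0 \<and>
         (\<forall>j. (GREATEST j. j < N \<and> c j \<noteq> 0) < j \<and> j < N \<longrightarrow> c j = 0)"
proof -
  obtain j0 where j0: "j0 < N \<and> c j0 \<noteq> 0" using assms by blast
  have bd: "\<forall>y. y < N \<and> c y \<noteq> 0 \<longrightarrow> y \<le> N" by simp
  have 1: "(GREATEST j. j < N \<and> c j \<noteq> 0) < N \<and> c (GREATEST j. j < N \<and> c j \<noteq> 0) \<noteq> 0"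
    by (rule GreatestI_nat[of _ j0 N]) (use j0 in auto)
  have 2: "c j = 0" if "(GREATEST j. j < N \<and> c j \<noteq> 0) < j" "j < N" for j
  proof (rule ccontr)
    assume "c j \<noteq> 0"
    then have "j \<le> (GREATEST j. j < N \<and> c j \<noteq> 0)"
      by (intro Greatest_le_nat[of _ j N]) (use that in auto)
    then show False using that by simp
  qed
  show ?thesis using 1 2 by blast
qed

lemma Y_app: "(\<Sum>j<N. scaleS (c j) (del j v)) i = (if i < N then c i *s (v::complex^'d::finite) else 0)"
proof -
  have "(\<Sum>j<N. scaleS (c j) (del j v)) i = (\<Sum>j<N. c j *s del j v i)" by (simp add: sum_app)
  also have "\<dots> = (\<Sum>j<N. if j = i then c j *s v else 0)" by (rule sum.cong) (auto simp: del_def)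
  also have "\<dots> = (if i < N then c i *s v else 0)" by (simp add: sum.delta')
  finally show ?thesis .
qed

lemma A0_comm: "0 \<le> m \<Longrightarrow> Tpow m (Akappa p q a 0 x) = Akappa p q a 0 (Tpow m x)"
  using A5[of m p q a x] A7[of p q a "- m" x] by simp

context setupA begin

lemma range_sub: "x \<in> l2 \<Longrightarrow> Akappa p q a \<kappa> x \<in> Akappa p q a 0 ` l2"
  using A7[of p q a \<kappa> x] l2_Tpow by blast

lemma G_all: "\<exists>x\<in>l2. Akappa p q a 0 x = del 0 v"
proof (rule ccontr)
  assume nG: "\<not> (\<exists>x\<in>l2. Akappa p q a 0 x = del 0 v)"
  obtain B where B: "finite B" "B \<subseteq> l2" "l2 \<subseteq> setplus (Akappa p q a (-p) ` l2) (cspan B)"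
    by (rule fred_coker)
  have dec: "\<exists>x\<in>l2. z - Akappa p q a 0 x \<in> cspan B" if zl: "z \<in> l2" for z
  proof -
    have "z \<in> setplus (Akappa p q a (-p) ` l2) (cspan B)" using B(3) zl by blast
    then obtain r b where rb: "z = r + b" "r \<in> Akappa p q a (-p) ` l2" "b \<in> cspan B"
      unfolding setplus_def by blast
    then obtain x where x: "x \<in> l2" "r = Akappa p q a 0 x" using range_sub by blast
    then have "z - Akappa p q a 0 x = b" using rb by simp
    then show ?thesis using x rb(3) by (intro bexI[of _ x]) simp_all
  qed
  have "\<forall>j. \<exists>x. x \<in> l2 \<and> del j v - Akappa p q a 0 x \<in> cspan B"
  proof
    fix j show "\<exists>x. x \<in> l2 \<and> del j v - Akappa p q a 0 x \<in> cspan B"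
      using dec[OF del_l2[of j v]] by blast
  qed
  from choice[OF this] obtain X where X0: "\<forall>j. X j \<in> l2 \<and> del j v - Akappa p q a 0 (X j) \<in> cspan B"
    by blast
  have X: "\<And>j. X j \<in> l2" "\<And>j. del j v - Akappa p q a 0 (X j) \<in> cspan B" using X0 by auto
  define N where "N = Suc (card B)"
  have "\<exists>c. (\<exists>j<N. c j \<noteq> 0) \<and> (\<Sum>j<N. scaleS (c j) (del j v - Akappa p q a 0 (X j))) = 0"
    by (rule GEN[OF B(1)]) (auto simp: X N_def)
  then obtain c where c: "\<exists>j<N. c j \<noteq> 0"
    "(\<Sum>j<N. scaleS (c j) (del j v - Akappa p q a 0 (X j))) = 0" by blast
  define XX where "XX = (\<Sum>j<N. scaleS (c j) (X j))"
  have XXl2: "XX \<in> l2" unfolding XX_def by (rule l2_sum) (simp add: X l2_scale)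
  define Y where "Y = (\<Sum>j<N. scaleS (c j) (del j v))"
  have "Akappa p q a 0 XX = (\<Sum>j<N. scaleS (c j) (Akappa p q a 0 (X j)))"
    unfolding XX_def by (simp only: SP.linear_sum[OF linear_Akappa] SP.linear_scale[OF linear_Akappa])
  also have "\<dots> = Y"
  proof -
    have eqY: "(\<Sum>j<N. scaleS (c j) (del j v - Akappa p q a 0 (X j)))
        = Y - (\<Sum>j<N. scaleS (c j) (Akappa p q a 0 (X j)))"
      unfolding Y_def by (simp only: S.scale_right_diff_distrib sum_subtractf)
    have "Y - (\<Sum>j<N. scaleS (c j) (Akappa p q a 0 (X j))) = 0" using c(2) unfolding eqY .
    then show ?thesis by (rule sym[OF iffD1[OF eq_iff_diff_eq_0[symmetric]]])
  qed
  finally have AXX: "Akappa p q a 0 XX = Y" .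
  have Yi: "Y i = (if i < N then c i *s v else 0)" for i
    unfolding Y_def by (rule Y_app)
  define J where "J = (GREATEST j. j < N \<and> c j \<noteq> 0)"
  have JJ: "J < N \<and> c J \<noteq> 0 \<and> (\<forall>j. J < j \<and> j < N \<longrightarrow> c j = 0)"
    unfolding J_def by (rule greatest_aux[OF c(1)])
  then have J: "J < N" "c J \<noteq> 0" by simp_all
  have chigh: "c j = 0" if "J < j" "j < N" for j using JJ that by blast
  have "Tpow (int J) Y = del 0 (c J *s v)"
  proof (rule ext)
    fix i
    have "Tpow (int J) Y i = Y (i + J)" by (simp add: Tpow_apply)
    also have "\<dots> = del 0 (c J *s v) i"
    proof (cases "i = 0")
      case True then show ?thesis using J by (simp add: Yi del_def)
    next
      case False
      then have "c (i + J) = 0 \<or> \<not> i + J < N" using chigh[of "i + J"] by force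
      then show ?thesis using False by (auto simp: Yi del_def)
    qed
    finally show "Tpow (int J) Y i = del 0 (c J *s v) i" .
  qed
  then have e1: "Akappa p q a 0 (Tpow (int J) XX) = del 0 (c J *s v)"
    using A0_comm[of "int J" p q a XX] AXX by simp
  define x' where "x' = scaleS (1 / c J) (Tpow (int J) XX)"
  have x'l2: "x' \<in> l2" unfolding x'_def by (simp add: l2_scale l2_Tpow XXl2)
  have x'eq: "Akappa p q a 0 x' = del 0 v"
    unfolding x'_def Akappa_scale e1 using J by (auto simp: del_def fun_eq_iff)
  from x'eq x'l2 have "\<exists>x\<in>l2. Akappa p q a 0 x = del 0 v"
    by (rule bexI[where P="\<lambda>x. Akappa p q a 0 x = del 0 v"])
  then show False using nG by (rule notE[rotated])
qed

lemma S_all: "\<kappa> \<le> 0 \<Longrightarrow> \<exists>x\<in>l2. Akappa p q a \<kappa> x = del 0 v"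
proof -
  assume k: "\<kappa> \<le> 0"
  obtain x where x: "x \<in> l2" "Akappa p q a 0 x = del 0 v" using G_all by blast
  have "Akappa p q a \<kappa> (Tpow \<kappa> x) = Akappa p q a 0 (Tpow (- \<kappa>) (Tpow \<kappa> x))" by (rule A7)
  also have "\<dots> = Akappa p q a 0 x" using Tpow_comp[of "- \<kappa>" \<kappa> x] k by simp
  finally have "Akappa p q a \<kappa> (Tpow \<kappa> x) = del 0 v" using x(2) by simp
  moreover have "Tpow \<kappa> x \<in> l2" using x(1) by (rule l2_Tpow)
  ultimately show ?thesis by (intro bexI)
qed

end


context setupA begin

lemma phi_lin: "Vector_Spaces.linear scaleS (*s) (\<lambda>x. Akappa p q a \<kappa> x 0)"
  by (auto simp: Vector_Spaces.linear_iff S.vector_space_axioms vec.vector_space_axioms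
      Akappa_add Akappa_scale)

lemma kerphi: "{x \<in> KK (\<kappa> - 1). Akappa p q a \<kappa> x 0 = 0} = KK \<kappa>"
proof
  show "KK \<kappa> \<subseteq> {x \<in> KK (\<kappa> - 1). Akappa p q a \<kappa> x 0 = 0}"
    using K1[where p=p and q=q and a=a and \<kappa>="\<kappa> - 1"] by (auto simp: Ker_def)
  show "{x \<in> KK (\<kappa> - 1). Akappa p q a \<kappa> x 0 = 0} \<subseteq> KK \<kappa>"
  proof
    fix x assume x: "x \<in> {x \<in> KK (\<kappa> - 1). Akappa p q a \<kappa> x 0 = 0}"
    then have "Tpow 1 (Akappa p q a \<kappa> x) = 0" using A2[of p q a \<kappa> x] by (simp add: Ker_def)
    then have "Akappa p q a \<kappa> x (Suc j) = 0" for j by (metis T1_apply zero_fun_def)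
    moreover have "Akappa p q a \<kappa> x 0 = 0" using x by simp
    ultimately have "Akappa p q a \<kappa> x = 0" by (intro ext) (case_tac xa; simp)
    then show "x \<in> KK \<kappa>" using x by (simp add: Ker_def)
  qed
qed

lemma fdKp: "fd (KK (-p))"
  using fred_ker unfolding fd_def by metis

lemma fd_low: "fd (KK (-p - int j))"
proof (induction j)
  case 0 then show ?case using fdKp by simp
next
  case (Suc j)
  have e: "-p - int j - 1 = -p - int (Suc j)" by simp
  have "fd {x \<in> KK (-p - int j - 1). Akappa p q a (-p - int j) x 0 = 0}"
    using Suc by (simp only: kerphi)
  then have "fd (KK (-p - int j - 1))" by (rule FIN[OF KerA_subspace phi_lin])
  then show ?case by (simp only: e)
qed

lemma fdK: "fd (KK \<kappa>)"
proof (cases "-p \<le> \<kappa>")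
  case True then show ?thesis using fd_subset[OF K1' fdKp] by blast
next
  case False
  then have "\<kappa> = -p - int (nat (-p - \<kappa>))" by simp
  then show ?thesis using fd_low by metis
qed

lemma dimstep: "\<kappa> \<le> 0 \<Longrightarrow> cdim (KK (\<kappa> - 1)) = cdim (KK \<kappa>) + CARD('d)"
proof -
  assume k: "\<kappa> \<le> 0"
  have sur: "\<exists>x\<in>KK (\<kappa> - 1). Akappa p q a \<kappa> x 0 = v" for v
  proof -
    obtain x where x: "x \<in> l2" "Akappa p q a \<kappa> x = del 0 v" using S_all[OF k] by blast
    have "Akappa p q a (\<kappa> - 1) x = Tpow 1 (Akappa p q a \<kappa> x)" by (simp add: A2)
    also have "\<dots> = 0" using x(2) by (simp add: del_def fun_eq_iff)
    finally have "x \<in> KK (\<kappa> - 1)" using x(1) by (simp add: Ker_def)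
    moreover have "Akappa p q a \<kappa> x 0 = v" using x(2) by (simp add: del_def)
    ultimately show ?thesis by blast
  qed
  have fK: "fd {x \<in> KK (\<kappa> - 1). Akappa p q a \<kappa> x 0 = 0}" by (simp only: kerphi fdK)
  have "fd (KK (\<kappa> - 1)) \<and> cdim (KK (\<kappa> - 1)) = cdim {x \<in> KK (\<kappa> - 1). Akappa p q a \<kappa> x 0 = 0} + CARD('d)"
    by (rule RN[OF KerA_subspace phi_lin sur fK])
  then show ?thesis by (simp only: kerphi)
qed

end


definition IIn :: "int \<Rightarrow> int \<Rightarrow> (int \<times> nat) set" where
  "IIn n \<kappa> = {(k', r). \<kappa> < k' \<and> k' \<le> n \<and> int r < k' - \<kappa>}"

definition ZZ :: "int \<Rightarrow> int \<Rightarrow> (int \<times> nat) set" where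
  "ZZ n \<kappa> = {i \<in> IIn n \<kappa>. snd i = 0}"

definition sh :: "int \<times> nat \<Rightarrow> int \<times> nat" where
  "sh i = (fst i, Suc (snd i))"

lemma inj_sh: "inj sh" by (auto simp: inj_def sh_def prod_eq_iff)

lemma IIn_finite: "finite (IIn n \<kappa>)"
proof -
  have "IIn n \<kappa> \<subseteq> {\<kappa><..n} \<times> {..<nat (n - \<kappa>)}" by (auto simp: IIn_def)
  then show ?thesis by (rule finite_subset) simp
qed

lemma ZZ_finite: "finite (ZZ n \<kappa>)" by (simp add: ZZ_def IIn_finite)

lemma IIn_empty: "n \<le> \<kappa> \<Longrightarrow> IIn n \<kappa> = {}" by (auto simp: IIn_def)

lemma IIn_mono: "IIn n (\<kappa> + 1) \<subseteq> IIn n \<kappa>" by (auto simp: IIn_def)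

lemma IIn_mono': "IIn n \<kappa> \<subseteq> IIn n (\<kappa> - 1)" by (auto simp: IIn_def)

lemma sh_image: "sh ` IIn n \<kappa> = {i \<in> IIn n (\<kappa> - 1). snd i \<noteq> 0}"
proof
  show "sh ` IIn n \<kappa> \<subseteq> {i \<in> IIn n (\<kappa> - 1). snd i \<noteq> 0}" by (auto simp: IIn_def sh_def)
  show "{i \<in> IIn n (\<kappa> - 1). snd i \<noteq> 0} \<subseteq> sh ` IIn n \<kappa>"
  proof
    fix i assume i: "i \<in> {i \<in> IIn n (\<kappa> - 1). snd i \<noteq> 0}"
    obtain k r where kr: "i = (k, Suc r)" using i by (cases i; cases "snd i") auto
    then have "(k, r) \<in> IIn n \<kappa>" using i by (auto simp: IIn_def)
    moreover have "i = sh (k, r)" using kr by (simp add: sh_def)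
    ultimately show "i \<in> sh ` IIn n \<kappa>" by blast
  qed
qed

lemma split_sum: "sum F (IIn n \<kappa>) = sum F (ZZ n \<kappa>) + (\<Sum>i\<in>IIn n (\<kappa> + 1). F (sh i))"
proof -
  have e: "IIn n \<kappa> = ZZ n \<kappa> \<union> sh ` IIn n (\<kappa> + 1)"
    using sh_image[of n "\<kappa> + 1"] by (auto simp: ZZ_def)
  have d: "ZZ n \<kappa> \<inter> sh ` IIn n (\<kappa> + 1) = {}" by (auto simp: ZZ_def sh_def)
  have "sum F (IIn n \<kappa>) = sum F (ZZ n \<kappa>) + sum F (sh ` IIn n (\<kappa> + 1))"
    unfolding e by (rule sum.union_disjoint) (simp_all add: ZZ_finite IIn_finite d)
  also have "sum F (sh ` IIn n (\<kappa> + 1)) = (\<Sum>i\<in>IIn n (\<kappa> + 1). F (sh i))"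
    by (simp add: sum.reindex[OF inj_on_subset[OF inj_sh]])
  finally show ?thesis .
qed

lemma ZZ_rec: "\<kappa> \<le> n \<Longrightarrow> ZZ n (\<kappa> - 1) = insert (\<kappa>, 0) (ZZ n \<kappa>) \<and> (\<kappa>, 0) \<notin> ZZ n \<kappa>"
  by (auto simp: ZZ_def IIn_def)

lemma ZZ_sub: "ZZ n \<kappa> \<subseteq> IIn n \<kappa>" by (auto simp: ZZ_def)

lemma sum_restrict: "A \<subseteq> B \<Longrightarrow> finite B \<Longrightarrow> (\<Sum>i\<in>B. if i \<in> A then f i else 0) = sum f A"
  by (simp add: sum.inter_restrict[symmetric] Int_absorb1 inf.absorb2)


definition UU :: "(int \<Rightarrow> 'd::finite seq set) \<Rightarrow> int \<times> nat \<Rightarrow> 'd seq set" where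
  "UU D = (\<lambda>(k', r). Tpow (- int r) ` D k')"

lemma UU_apply: "UU D (k, r) = Tpow (- int r) ` D k" by (simp add: UU_def)

locale setupD = setupA p q a for p q :: int and a :: "int \<Rightarrow> complex^'d^'d::finite" +
  fixes D :: "int \<Rightarrow> 'd seq set"
  assumes Dsub: "\<And>\<kappa>. csubspace (D \<kappa>)"
    and Dsum: "\<And>\<kappa>. Ker (Akappa p q a (\<kappa> - 1)) =
                 setplus (setplus (Ker (Akappa p q a \<kappa>)) (Tpow (-1) ` Ker (Akappa p q a \<kappa>))) (D \<kappa>)"
    and Dint: "\<And>\<kappa>. setplus (Ker (Akappa p q a \<kappa>)) (Tpow (-1) ` Ker (Akappa p q a \<kappa>)) \<inter> D \<kappa> = {0}"
begin

abbreviation "U \<equiv> UU D"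
abbreviation "II \<equiv> IIn (q - p)"
abbreviation "ZZZ \<equiv> ZZ (q - p)"
abbreviation "P \<kappa> \<equiv> is_direct_sum (II \<kappa>) U (KK \<kappa>)"

lemma U_sub: "csubspace (U i)"
  by (cases i) (simp add: UU_apply SP.linear_subspace_image[OF linear_Tpow Dsub])

lemma U_0: "0 \<in> U i" using S.subspace_0[OF U_sub] .

lemma U_Td: "x \<in> U (k, r) \<Longrightarrow> Tpow (-1) x \<in> U (k, Suc r)"
proof -
  assume "x \<in> U (k, r)"
  then obtain d where d: "d \<in> D k" "x = Tpow (- int r) d" by (auto simp: UU_apply)
  have "Tpow (-1) x = Tpow (- int (Suc r)) d" by (simp only: d(2) Tpow_neg_Suc)
  then show ?thesis using d(1) unfolding UU_apply by blast
qed

lemma U_T: "x \<in> U (k, Suc r) \<Longrightarrow> Tpow 1 x \<in> U (k, r) \<and> Tpow (-1) (Tpow 1 x) = x"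
proof -
  assume "x \<in> U (k, Suc r)"
  then obtain d where d: "d \<in> D k" "x = Tpow (- int (Suc r)) d" by (simp only: UU_apply) blast
  have e: "x = Tpow (-1) (Tpow (- int r) d)" by (simp only: d(2) Tpow_neg_Suc)
  have "Tpow 1 x = Tpow (- int r) d" unfolding e by (rule T_Td)
  then have "Tpow 1 x \<in> U (k, r)" using d(1) unfolding UU_apply by blast
  moreover have "Tpow (-1) (Tpow 1 x) = x" unfolding e T_Td ..
  ultimately show ?thesis by blast
qed

lemma U_D: "U (k, 0) = D k" by (simp add: UU_apply)

lemma Td_K_sub: "csubspace (Tpow (-1) ` KK \<kappa>)"
  by (rule SP.linear_subspace_image[OF linear_Tpow KerA_subspace])

lemma KT_sub: "csubspace (setplus (KK \<kappa>) (Tpow (-1) ` KK \<kappa>))"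
  by (rule setplus_subspace[OF KerA_subspace Td_K_sub])

lemma part0: "setplus (KK \<kappa>) (Tpow (-1) ` KK \<kappa>) \<subseteq> KK (\<kappa> - 1)"
proof (rule setplus_sub[OF KerA_subspace])
  show "KK \<kappa> \<subseteq> KK (\<kappa> - 1)" using K1[where p=p and q=q and a=a and \<kappa>="\<kappa> - 1"] by simp
  show "Tpow (-1) ` KK \<kappa> \<subseteq> KK (\<kappa> - 1)"
  proof
    fix y assume "y \<in> Tpow (-1) ` KK \<kappa>"
    then obtain x where x: "x \<in> KK \<kappa>" "y = Tpow (-1) x" by blast
    then show "y \<in> KK (\<kappa> - 1)" using K2[of x p q a "\<kappa> - 1"] Ker_l2[OF x(1)] by simp
  qed
qed

lemma D_sub: "D \<kappa> \<subseteq> KK (\<kappa> - 1)"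
proof
  fix d assume d: "d \<in> D \<kappa>"
  have "0 \<in> setplus (KK \<kappa>) (Tpow (-1) ` KK \<kappa>)" using S.subspace_0[OF KT_sub] .
  then have "0 + d \<in> setplus (setplus (KK \<kappa>) (Tpow (-1) ` KK \<kappa>)) (D \<kappa>)"
    unfolding setplus_def[of _ "D \<kappa>"] using d by blast
  then show "d \<in> KK (\<kappa> - 1)" using Dsum[of \<kappa>] by simp
qed

lemma fdD: "fd (D \<kappa>)" using fd_subset[OF D_sub fdK] .

lemma dimA: "cdim (setplus (KK \<kappa>) (Tpow (-1) ` KK \<kappa>)) + cdim (KK (\<kappa> + 1)) = 2 * cdim (KK \<kappa>)"
proof -
  obtain C where C: "csubspace C" "C \<subseteq> KK \<kappa>" "KK (\<kappa> + 1) \<inter> C \<subseteq> {0}"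
    "setplus (KK (\<kappa> + 1)) C = KK \<kappa>" "fd C"
    by (rule COMP[OF KerA_subspace KerA_subspace K1 fdK])
  have d1: "cdim (KK \<kappa>) = cdim (KK (\<kappa> + 1)) + cdim C"
    using DS[OF KerA_subspace C(1) fdK C(5) C(3)] C(4) by simp
  have injTd: "inj (Tpow (-1) :: 'd seq \<Rightarrow> 'd seq)" by (rule injI) (rule Td_inj)
  have TC: "fd (Tpow (-1) ` C) \<and> cdim (Tpow (-1) ` C) = cdim C"
    by (rule INJ[OF linear_Tpow injTd C(1) C(5)])
  have TCsub: "csubspace (Tpow (-1) ` C)" by (rule SP.linear_subspace_image[OF linear_Tpow C(1)])
  have eq: "setplus (KK \<kappa>) (Tpow (-1) ` KK \<kappa>) = setplus (KK \<kappa>) (Tpow (-1) ` C)"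
  proof
    show "setplus (KK \<kappa>) (Tpow (-1) ` C) \<subseteq> setplus (KK \<kappa>) (Tpow (-1) ` KK \<kappa>)"
      using C(2) unfolding setplus_def by blast
    show "setplus (KK \<kappa>) (Tpow (-1) ` KK \<kappa>) \<subseteq> setplus (KK \<kappa>) (Tpow (-1) ` C)"
    proof
      fix z assume "z \<in> setplus (KK \<kappa>) (Tpow (-1) ` KK \<kappa>)"
      then obtain u v where uv: "z = u + Tpow (-1) v" "u \<in> KK \<kappa>" "v \<in> KK \<kappa>"
        unfolding setplus_def by blast
      then obtain w c where wc: "v = w + c" "w \<in> KK (\<kappa> + 1)" "c \<in> C"
        using C(4) unfolding setplus_def by blast
      have "Tpow (-1) w \<in> KK \<kappa>" using K2[of w p q a \<kappa>] Ker_l2[OF wc(2)] wc(2) by simp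
      then have "u + Tpow (-1) w \<in> KK \<kappa>" using uv(2) S.subspace_add[OF KerA_subspace] by blast
      moreover have "z = (u + Tpow (-1) w) + Tpow (-1) c" using uv(1) wc(1) by (simp add: Tpow_add)
      ultimately show "z \<in> setplus (KK \<kappa>) (Tpow (-1) ` C)" unfolding setplus_def using wc(3) by blast
    qed
  qed
  have int: "KK \<kappa> \<inter> Tpow (-1) ` C \<subseteq> {0}"
  proof
    fix z assume z: "z \<in> KK \<kappa> \<inter> Tpow (-1) ` C"
    then obtain c where c: "c \<in> C" "z = Tpow (-1) c" by blast
    have "c \<in> l2" using C(2) c(1) Ker_l2 by blast
    then have "c \<in> KK (\<kappa> + 1)" using K2[of c p q a \<kappa>] z c by simp
    then have "c = 0" using C(3) c(1) by blast
    then show "z \<in> {0}" using c by simp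
  qed
  have "cdim (setplus (KK \<kappa>) (Tpow (-1) ` C)) = cdim (KK \<kappa>) + cdim (Tpow (-1) ` C)"
    using DS[OF KerA_subspace TCsub fdK _ int] TC by simp
  then show ?thesis using eq TC d1 by simp
qed

lemma dimB: "cdim (KK (\<kappa> - 1)) = cdim (setplus (KK \<kappa>) (Tpow (-1) ` KK \<kappa>)) + cdim (D \<kappa>)"
proof -
  have f: "fd (setplus (KK \<kappa>) (Tpow (-1) ` KK \<kappa>))" using fd_subset[OF part0 fdK] .
  have "fd (setplus (setplus (KK \<kappa>) (Tpow (-1) ` KK \<kappa>)) (D \<kappa>)) \<and>
    cdim (setplus (setplus (KK \<kappa>) (Tpow (-1) ` KK \<kappa>)) (D \<kappa>)) =
    cdim (setplus (KK \<kappa>) (Tpow (-1) ` KK \<kappa>)) + cdim (D \<kappa>)"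
    by (rule DS[OF KT_sub Dsub f fdD]) (simp add: Dint)
  then show ?thesis using Dsum[of \<kappa>] by simp
qed

end


definition unsh :: "int \<times> nat \<Rightarrow> int \<times> nat" where
  "unsh i = (fst i, snd i - 1)"

lemma unsh_sh[simp]: "unsh (sh i) = i" by (simp add: unsh_def sh_def)
lemma sh_unsh: "snd i \<noteq> 0 \<Longrightarrow> sh (unsh i) = i" by (cases i) (simp add: unsh_def sh_def)
lemma snd_sh[simp]: "snd (sh i) \<noteq> 0" by (simp add: sh_def)

context setupD begin

lemma P_base: "q - p \<le> \<kappa> \<Longrightarrow> P \<kappa>"
  using part1[of \<kappa>] IIn_empty[of "q - p" \<kappa>] by (simp add: is_direct_sum_def)

lemma P_mem: "P \<kappa> \<Longrightarrow> (\<forall>i\<in>II \<kappa>. f i \<in> U i) \<Longrightarrow> sum f (II \<kappa>) \<in> KK \<kappa>"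
  unfolding is_direct_sum_def by blast

lemma P_span: "P \<kappa> \<Longrightarrow> x \<in> KK \<kappa> \<Longrightarrow> \<exists>f. (\<forall>i\<in>II \<kappa>. f i \<in> U i) \<and> x = sum f (II \<kappa>)"
  unfolding is_direct_sum_def by blast

lemma P_uniq: "P \<kappa> \<Longrightarrow> (\<forall>i\<in>II \<kappa>. f i \<in> U i) \<Longrightarrow> sum f (II \<kappa>) = 0 \<Longrightarrow> i \<in> II \<kappa> \<Longrightarrow> f i = 0"
  unfolding is_direct_sum_def by blast

lemma P_sub: assumes P: "P \<kappa>" and i: "i \<in> II \<kappa>" and y: "y \<in> U i" shows "y \<in> KK \<kappa>"
proof -
  define f where "f j = (if j = i then y else 0)" for j
  have "\<forall>j\<in>II \<kappa>. f j \<in> U j" using y U_0 by (simp add: f_def)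
  moreover have "sum f (II \<kappa>) = y" using i by (simp add: f_def sum.delta' IIn_finite)
  ultimately show ?thesis using P_mem[OF P] by metis
qed

lemma P_uniq2:
  assumes P: "P \<kappa>" and f: "\<forall>i\<in>II \<kappa>. f i \<in> U i" and g: "\<forall>i\<in>II \<kappa>. g i \<in> U i"
    and e: "sum f (II \<kappa>) = sum g (II \<kappa>)" and i: "i \<in> II \<kappa>"
  shows "f i = g i"
proof -
  have "\<forall>i\<in>II \<kappa>. f i - g i \<in> U i" using f g S.subspace_diff[OF U_sub] by blast
  moreover have "(\<Sum>i\<in>II \<kappa>. f i - g i) = 0" using e by (simp add: sum_subtractf)
  ultimately have "f i - g i = 0" by (rule P_uniq[OF P _ _ i])
  then show ?thesis by simp
qed

lemma Td_sum: "Tpow (-1) (sum h S) = (\<Sum>i\<in>S. Tpow (-1) (h i))"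
  by (rule SP.linear_sum[OF linear_Tpow])

lemma sh_in: "i \<in> II \<kappa> \<Longrightarrow> sh i \<in> II (\<kappa> - 1)"
  using sh_image[of "q - p" \<kappa>] by blast

lemma unsh_in: "i \<in> II (\<kappa> - 1) \<Longrightarrow> snd i \<noteq> 0 \<Longrightarrow> unsh i \<in> II \<kappa>"
  using sh_image[of "q - p" \<kappa>] by (metis (mono_tags, lifting) imageE mem_Collect_eq unsh_sh)

lemma U_sh: "x \<in> U (sh i) \<Longrightarrow> Tpow 1 x \<in> U i \<and> Tpow (-1) (Tpow 1 x) = x"
  by (cases i) (simp add: sh_def U_T)

lemma U_Td': "x \<in> U i \<Longrightarrow> Tpow (-1) x \<in> U (sh i)"
  by (cases i) (simp add: sh_def U_Td)

lemma DEC: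
  assumes k: "\<kappa> \<le> q - p" and F: "\<forall>i\<in>II (\<kappa> - 1). F i \<in> U i"
  shows "sum F (II (\<kappa> - 1)) = F (\<kappa>, 0) + sum F (ZZZ \<kappa>) + Tpow (-1) (\<Sum>i\<in>II \<kappa>. Tpow 1 (F (sh i)))"
proof -
  have "sum F (II (\<kappa> - 1)) = sum F (ZZZ (\<kappa> - 1)) + (\<Sum>i\<in>II (\<kappa> - 1 + 1). F (sh i))"
    by (rule split_sum)
  also have "sum F (ZZZ (\<kappa> - 1)) = F (\<kappa>, 0) + sum F (ZZZ \<kappa>)"
    using ZZ_rec[OF k] by (simp add: ZZ_finite)
  also have "(\<Sum>i\<in>II (\<kappa> - 1 + 1). F (sh i)) = (\<Sum>i\<in>II \<kappa>. Tpow (-1) (Tpow 1 (F (sh i))))"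
  proof -
    have "F (sh i) = Tpow (-1) (Tpow 1 (F (sh i)))" if "i \<in> II \<kappa>" for i
      using U_sh[of "F (sh i)" i] F sh_in[OF that] by simp
    then show ?thesis by simp
  qed
  finally show ?thesis by (simp only: Td_sum add.assoc)
qed

end


context setupD begin

lemma step_sup:
  assumes k: "\<kappa> \<le> q - p" and P: "P \<kappa>" and F: "\<forall>i\<in>II (\<kappa> - 1). F i \<in> U i"
  shows "sum F (II (\<kappa> - 1)) \<in> KK (\<kappa> - 1)"
proof -
  define u where "u = sum F (ZZZ \<kappa>)"
  define v where "v = (\<Sum>i\<in>II \<kappa>. Tpow 1 (F (sh i)))"
  have uK: "u \<in> KK \<kappa>" unfolding u_def
  proof (rule S.subspace_sum[OF KerA_subspace])
    fix i assume i: "i \<in> ZZZ \<kappa>"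
    then have "i \<in> II \<kappa>" using ZZ_sub by blast
    moreover have "F i \<in> U i" using F i ZZ_sub IIn_mono' by blast
    ultimately show "F i \<in> KK \<kappa>" by (rule P_sub[OF P])
  qed
  have vK: "v \<in> KK \<kappa>" unfolding v_def
  proof (rule P_mem[OF P], intro ballI)
    fix i assume i: "i \<in> II \<kappa>"
    then have "F (sh i) \<in> U (sh i)" using F sh_in by blast
    then show "Tpow 1 (F (sh i)) \<in> U i" using U_sh by blast
  qed
  have d: "F (\<kappa>, 0) \<in> D \<kappa>"
  proof -
    have "(\<kappa>, 0) \<in> II (\<kappa> - 1)" using k by (simp add: IIn_def)
    then show ?thesis using F U_D by blast
  qed
  have "u + Tpow (-1) v \<in> setplus (KK \<kappa>) (Tpow (-1) ` KK \<kappa>)"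
    unfolding setplus_def using uK vK by blast
  then have "(u + Tpow (-1) v) + F (\<kappa>, 0) \<in> setplus (setplus (KK \<kappa>) (Tpow (-1) ` KK \<kappa>)) (D \<kappa>)"
    unfolding setplus_def[of _ "D \<kappa>"] using d by blast
  then have "(u + Tpow (-1) v) + F (\<kappa>, 0) \<in> KK (\<kappa> - 1)" using Dsum[of \<kappa>] by simp
  moreover have "sum F (II (\<kappa> - 1)) = (u + Tpow (-1) v) + F (\<kappa>, 0)"
    unfolding u_def v_def DEC[OF k F] by (simp only: ac_simps)
  ultimately show ?thesis by simp
qed

lemma step_sub:
  assumes k: "\<kappa> \<le> q - p" and P: "P \<kappa>" and x: "x \<in> KK (\<kappa> - 1)"
  shows "\<exists>F. (\<forall>i\<in>II (\<kappa> - 1). F i \<in> U i) \<and> x = sum F (II (\<kappa> - 1))"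
proof -
  obtain w d where wd: "x = w + d" "w \<in> setplus (KK \<kappa>) (Tpow (-1) ` KK \<kappa>)" "d \<in> D \<kappa>"
    using x Dsum[of \<kappa>] unfolding setplus_def[of _ "D \<kappa>"] by blast
  obtain u v where uv: "w = u + Tpow (-1) v" "u \<in> KK \<kappa>" "v \<in> KK \<kappa>"
    using wd(2) unfolding setplus_def by blast
  obtain f where f: "\<forall>i\<in>II \<kappa>. f i \<in> U i" "u = sum f (II \<kappa>)" using P_span[OF P uv(2)] by blast
  obtain g where g: "\<forall>i\<in>II \<kappa>. g i \<in> U i" "v = sum g (II \<kappa>)" using P_span[OF P uv(3)] by blast
  define F1 where "F1 i = (if i = (\<kappa>, 0) then d else 0)" for i :: "int \<times> nat"
  define F2 where "F2 i = (if i \<in> II \<kappa> then f i else 0)" for i :: "int \<times> nat"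
  define F3 where "F3 i = (if snd i \<noteq> 0 then Tpow (-1) (g (unsh i)) else 0)" for i :: "int \<times> nat"
  define F where "F i = F1 i + F2 i + F3 i" for i :: "int \<times> nat"
  have k0: "(\<kappa>, 0) \<in> II (\<kappa> - 1)" using k by (simp add: IIn_def)
  have FU: "\<forall>i\<in>II (\<kappa> - 1). F i \<in> U i"
  proof
    fix i assume i: "i \<in> II (\<kappa> - 1)"
    have 1: "F1 i \<in> U i" using wd(3) U_D U_0 by (auto simp: F1_def)
    have 2: "F2 i \<in> U i" using f(1) U_0 by (auto simp: F2_def)
    have 3: "F3 i \<in> U i"
    proof (cases "snd i = 0")
      case True then show ?thesis using U_0 by (simp add: F3_def)
    next
      case False
      then have "unsh i \<in> II \<kappa>" using unsh_in i by blast
      then have "g (unsh i) \<in> U (unsh i)" using g(1) by blast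
      then have "Tpow (-1) (g (unsh i)) \<in> U (sh (unsh i))" by (rule U_Td')
      then show ?thesis using False by (simp add: F3_def sh_unsh)
    qed
    show "F i \<in> U i" unfolding F_def using 1 2 3 S.subspace_add[OF U_sub] by blast
  qed
  have fin: "finite (II (\<kappa> - 1))" by (rule IIn_finite)
  have s1: "sum F1 (II (\<kappa> - 1)) = d" using k0 fin by (simp add: F1_def sum.delta')
  have s2: "sum F2 (II (\<kappa> - 1)) = u" unfolding F2_def f(2) by (rule sum_restrict[OF IIn_mono' fin])
  have s3: "sum F3 (II (\<kappa> - 1)) = Tpow (-1) v"
  proof -
    have "sum F3 (II (\<kappa> - 1)) = sum (\<lambda>i. Tpow (-1) (g (unsh i))) {i \<in> II (\<kappa> - 1). snd i \<noteq> 0}"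
      unfolding F3_def by (rule sum.inter_filter[OF fin, symmetric])
    also have "\<dots> = sum (\<lambda>i. Tpow (-1) (g (unsh i))) (sh ` II \<kappa>)"
      by (simp only: sh_image)
    also have "\<dots> = (\<Sum>i\<in>II \<kappa>. Tpow (-1) (g i))"
      by (simp add: sum.reindex[OF inj_on_subset[OF inj_sh]])
    also have "\<dots> = Tpow (-1) v" unfolding g(2) by (rule Td_sum[symmetric])
    finally show ?thesis .
  qed
  have "sum F (II (\<kappa> - 1)) = d + u + Tpow (-1) v"
    unfolding F_def by (simp only: sum.distrib s1 s2 s3)
  then have "x = sum F (II (\<kappa> - 1))" using wd(1) uv(1) by (simp only: ac_simps)
  then show ?thesis using FU by blast
qed

end


context setupD begin

lemma step_uniq:
  assumes k: "\<kappa> \<le> q - p" and P: "P \<kappa>" and P1: "P (\<kappa> + 1)"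
    and F: "\<forall>i\<in>II (\<kappa> - 1). F i \<in> U i" and z: "sum F (II (\<kappa> - 1)) = 0"
    and i0: "i0 \<in> II (\<kappa> - 1)"
  shows "F i0 = 0"
proof -
  define h where "h i = Tpow 1 (F (sh i))" for i
  define u where "u = sum F (ZZZ \<kappa>)"
  define v where "v = sum h (II \<kappa>)"
  have hU: "\<forall>i\<in>II \<kappa>. h i \<in> U i"
  proof
    fix i assume i: "i \<in> II \<kappa>"
    then have "F (sh i) \<in> U (sh i)" using F sh_in by blast
    then show "h i \<in> U i" unfolding h_def using U_sh by blast
  qed
  have Fsh: "F (sh i) = Tpow (-1) (h i)" if "i \<in> II \<kappa>" for i
    using U_sh[of "F (sh i)" i] F sh_in[OF that] by (simp add: h_def)
  have uK: "u \<in> KK \<kappa>" unfolding u_def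
  proof (rule S.subspace_sum[OF KerA_subspace])
    fix i assume i: "i \<in> ZZZ \<kappa>"
    then have "i \<in> II \<kappa>" using ZZ_sub by blast
    moreover have "F i \<in> U i" using F i ZZ_sub IIn_mono' by blast
    ultimately show "F i \<in> KK \<kappa>" by (rule P_sub[OF P])
  qed
  have vK: "v \<in> KK \<kappa>" unfolding v_def by (rule P_mem[OF P hU])
  have hh: "h = (\<lambda>i. Tpow 1 (F (sh i)))" by (simp add: h_def fun_eq_iff)
  have dec: "F (\<kappa>, 0) + u + Tpow (-1) v = 0"
    using DEC[OF k F] z unfolding u_def v_def hh by simp
  have k0: "(\<kappa>, 0) \<in> II (\<kappa> - 1)" using k by (simp add: IIn_def)
  have Fk0: "F (\<kappa>, 0) = 0"
  proof -
    have w: "u + Tpow (-1) v \<in> setplus (KK \<kappa>) (Tpow (-1) ` KK \<kappa>)"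
      unfolding setplus_def using uK vK by blast
    have "F (\<kappa>, 0) + (u + Tpow (-1) v) = 0" using dec by (simp only: add.assoc)
    then have "F (\<kappa>, 0) = - (u + Tpow (-1) v)" by (simp only: eq_neg_iff_add_eq_0)
    then have "F (\<kappa>, 0) \<in> setplus (KK \<kappa>) (Tpow (-1) ` KK \<kappa>)"
      using S.subspace_neg[OF KT_sub w] by simp
    moreover have "F (\<kappa>, 0) \<in> D \<kappa>" using F k0 U_D by blast
    ultimately show ?thesis using Dint[of \<kappa>] by blast
  qed
  have uv: "u + Tpow (-1) v = 0" using dec Fk0 by (simp add: add.assoc)
  have "Tpow (-1) v = - u" using uv by (simp add: eq_neg_iff_add_eq_0 add.commute)
  then have "Tpow (-1) v \<in> KK \<kappa>" using S.subspace_neg[OF KerA_subspace uK] by simp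
  then have vK1: "v \<in> KK (\<kappa> + 1)" using K2[of v p q a \<kappa>] Ker_l2[OF vK] by simp
  obtain g where g: "\<forall>i\<in>II (\<kappa> + 1). g i \<in> U i" "v = sum g (II (\<kappa> + 1))"
    using P_span[OF P1 vK1] by blast
  define g' where "g' i = (if i \<in> II (\<kappa> + 1) then g i else 0)" for i
  have g'U: "\<forall>i\<in>II \<kappa>. g' i \<in> U i" using g(1) U_0 by (simp add: g'_def)
  have "sum g' (II \<kappa>) = v" unfolding g'_def g(2) by (rule sum_restrict[OF IIn_mono IIn_finite])
  then have hg: "h i = g' i" if "i \<in> II \<kappa>" for i
    using P_uniq2[OF P hU g'U _ that] v_def by simp
  define G where "G i = (if snd i = 0 then F i else Tpow (-1) (h (unsh i)))" for i
  have GU: "\<forall>i\<in>II \<kappa>. G i \<in> U i"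
  proof
    fix i assume i: "i \<in> II \<kappa>"
    show "G i \<in> U i"
    proof (cases "snd i = 0")
      case True then show ?thesis using F i IIn_mono' by (auto simp: G_def)
    next
      case False
      then have "unsh i \<in> II (\<kappa> + 1)" using unsh_in[of i "\<kappa> + 1"] i by simp
      then have "unsh i \<in> II \<kappa>" using IIn_mono by blast
      then have "h (unsh i) \<in> U (unsh i)" using hU by blast
      then have "Tpow (-1) (h (unsh i)) \<in> U (sh (unsh i))" by (rule U_Td')
      then show ?thesis using False by (simp add: G_def sh_unsh)
    qed
  qed
  have "sum G (II \<kappa>) = sum G (ZZZ \<kappa>) + (\<Sum>i\<in>II (\<kappa> + 1). G (sh i))" by (rule split_sum)
  also have "sum G (ZZZ \<kappa>) = u" unfolding u_def by (rule sum.cong) (auto simp: ZZ_def G_def)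
  also have "(\<Sum>i\<in>II (\<kappa> + 1). G (sh i)) = (\<Sum>i\<in>II (\<kappa> + 1). Tpow (-1) (g i))"
  proof (rule sum.cong)
    fix i assume i: "i \<in> II (\<kappa> + 1)"
    then have "i \<in> II \<kappa>" using IIn_mono by blast
    then have "h i = g i" using hg[of i] i by (simp add: g'_def)
    then show "G (sh i) = Tpow (-1) (g i)" by (simp add: G_def)
  qed simp
  also have "\<dots> = Tpow (-1) v" unfolding g(2) by (rule Td_sum[symmetric])
  finally have "sum G (II \<kappa>) = u + Tpow (-1) v" .
  then have "sum G (II \<kappa>) = 0" by (simp only: uv)
  then have G0: "G i = 0" if "i \<in> II \<kappa>" for i using P_uniq[OF P GU _ that] by simp
  have h0: "h i = 0" if "i \<in> II \<kappa>" for i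
  proof (cases "i \<in> II (\<kappa> + 1)")
    case True
    then have "sh i \<in> II \<kappa>" using sh_in[of i "\<kappa> + 1"] by simp
    then have "G (sh i) = 0" by (rule G0)
    then have "Tpow (-1) (h i) = Tpow (-1) 0" by (simp add: G_def)
    then show ?thesis by (rule Td_inj)
  next
    case False then show ?thesis using hg[OF that] by (simp add: g'_def)
  qed
  show ?thesis
  proof (cases "snd i0 = 0")
    case True
    show ?thesis
    proof (cases "i0 = (\<kappa>, 0)")
      case True then show ?thesis using Fk0 by simp
    next
      case False
      then have "i0 \<in> ZZZ \<kappa>" using ZZ_rec[OF k] i0 \<open>snd i0 = 0\<close> by (auto simp: ZZ_def)
      then have "i0 \<in> II \<kappa>" using ZZ_sub by blast
      then have "G i0 = 0" by (rule G0)
      then show ?thesis using \<open>snd i0 = 0\<close> by (simp add: G_def)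
    qed
  next
    case False
    then have j: "unsh i0 \<in> II \<kappa>" using unsh_in i0 by blast
    have "F i0 = F (sh (unsh i0))" using False by (simp add: sh_unsh)
    also have "\<dots> = Tpow (-1) (h (unsh i0))" by (rule Fsh[OF j])
    also have "\<dots> = 0" using h0[OF j] by simp
    finally show ?thesis .
  qed
qed

end


lemma cdim_zero: "cdim {0 :: 'd::finite seq} = 0"
proof -
  have "cdim (cspan ({} :: 'd seq set)) = cdim ({} :: 'd seq set)" by (rule S.dim_span)
  also have "\<dots> = 0" using S.dim_eq_card_independent[OF S.independent_empty] by simp
  finally show ?thesis by simp
qed

context setupD begin

lemma P_step: assumes k: "\<kappa> \<le> q - p" and P: "P \<kappa>" and P1: "P (\<kappa> + 1)" shows "P (\<kappa> - 1)"
  unfolding is_direct_sum_def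
proof (intro conjI allI impI)
  show "KK (\<kappa> - 1) = {sum F (II (\<kappa> - 1)) |F. \<forall>i\<in>II (\<kappa> - 1). F i \<in> U i}"
    using step_sub[OF k P] step_sup[OF k P] by blast
  fix F assume "(\<forall>i\<in>II (\<kappa> - 1). F i \<in> U i) \<and> sum F (II (\<kappa> - 1)) = 0"
  then show "\<forall>i\<in>II (\<kappa> - 1). F i = 0" using step_uniq[OF k P P1] by blast
qed

lemma P_all_aux: "P (q - p - int m) \<and> P (q - p + 1 - int m)"
proof (induction m)
  case 0 then show ?case using P_base by simp
next
  case (Suc m)
  have "P (q - p - int m - 1)"
    by (rule P_step) (use Suc in \<open>simp_all add: algebra_simps\<close>)
  then show ?case using Suc by (simp add: algebra_simps)
qed

lemma P_all: "P \<kappa>"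
proof (cases "q - p \<le> \<kappa>")
  case True then show ?thesis by (rule P_base)
next
  case False
  then have e: "q - p - int (nat (q - p - \<kappa>)) = \<kappa>" by simp
  have "P (q - p - int (nat (q - p - \<kappa>)))" using P_all_aux by (rule conjunct1)
  then show ?thesis unfolding e .
qed

definition kk where "kk \<kappa> = int (cdim (KK \<kappa>))"
definition ss where "ss \<kappa> = int (cdim (D \<kappa>))"

lemma rec: "ss \<kappa> = kk (\<kappa> - 1) - 2 * kk \<kappa> + kk (\<kappa> + 1)"
  using dimA[of \<kappa>] dimB[of \<kappa>] unfolding kk_def ss_def by linarith

lemma dstep': "\<kappa> \<le> 0 \<Longrightarrow> kk (\<kappa> - 1) = kk \<kappa> + int CARD('d)"
  using dimstep[of \<kappa>] unfolding kk_def by simp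

lemma kzero: "q - p \<le> \<kappa> \<Longrightarrow> kk \<kappa> = 0"
  using part1[of \<kappa>] cdim_zero unfolding kk_def by simp

lemma s_out: "q - p < \<kappa> \<or> \<kappa> < 0 \<Longrightarrow> ss \<kappa> = 0"
proof -
  assume h: "q - p < \<kappa> \<or> \<kappa> < 0"
  show ?thesis
  proof (cases "q - p < \<kappa>")
    case True then show ?thesis using rec[of \<kappa>] kzero[of "\<kappa> - 1"] kzero[of \<kappa>] kzero[of "\<kappa> + 1"] by simp
  next
    case False
    then have "\<kappa> < 0" using h by simp
    then show ?thesis using rec[of \<kappa>] dstep'[of \<kappa>] dstep'[of "\<kappa> + 1"] by simp
  qed
qed

lemma int_insert: "x \<le> y \<Longrightarrow> {x..y::int} = insert x {x + 1..y}" by auto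

lemma formula_aux:
  "kk (q - p - int m) = (\<Sum>k'\<in>{q - p - int m + 1..q - p}. (k' - (q - p - int m)) * ss k') \<and>
   kk (q - p - int m - 1) - kk (q - p - int m) = (\<Sum>k'\<in>{q - p - int m..q - p}. ss k')"
proof (induction m)
  case 0
  show ?case using rec[of "q - p"] kzero[of "q - p"] kzero[of "q - p + 1"] by simp
next
  case (Suc m)
  define \<kappa> where "\<kappa> = q - p - int m"
  have km: "\<kappa> \<le> q - p" by (simp add: \<kappa>_def)
  have IH1: "kk \<kappa> = (\<Sum>k'\<in>{\<kappa> + 1..q - p}. (k' - \<kappa>) * ss k')" using Suc \<kappa>_def by simp
  have IH2: "kk (\<kappa> - 1) - kk \<kappa> = (\<Sum>k'\<in>{\<kappa>..q - p}. ss k')" using Suc \<kappa>_def by simp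
  have e: "q - p - int (Suc m) = \<kappa> - 1" by (simp add: \<kappa>_def)
  have A: "(\<Sum>k'\<in>{\<kappa>..q - p}. (k' - \<kappa>) * ss k') = (\<Sum>k'\<in>{\<kappa> + 1..q - p}. (k' - \<kappa>) * ss k')"
    using int_insert[OF km] by simp
  have "(\<Sum>k'\<in>{\<kappa>..q - p}. (k' - (\<kappa> - 1)) * ss k')
      = (\<Sum>k'\<in>{\<kappa>..q - p}. (k' - \<kappa>) * ss k') + (\<Sum>k'\<in>{\<kappa>..q - p}. ss k')"
  proof -
    have "(\<Sum>k'\<in>{\<kappa>..q - p}. (k' - (\<kappa> - 1)) * ss k')
        = (\<Sum>k'\<in>{\<kappa>..q - p}. (k' - \<kappa>) * ss k' + ss k')"
      by (rule sum.cong) (simp_all add: algebra_simps)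
    then show ?thesis by (simp only: sum.distrib)
  qed
  then have 1: "kk (\<kappa> - 1) = (\<Sum>k'\<in>{\<kappa> - 1 + 1..q - p}. (k' - (\<kappa> - 1)) * ss k')"
    using A IH1 IH2 by simp
  have "{\<kappa> - 1..q - p} = insert (\<kappa> - 1) {\<kappa>..q - p}" using km by auto
  then have "(\<Sum>k'\<in>{\<kappa> - 1..q - p}. ss k') = ss (\<kappa> - 1) + (\<Sum>k'\<in>{\<kappa>..q - p}. ss k')" by simp
  then have 2: "kk (\<kappa> - 1 - 1) - kk (\<kappa> - 1) = (\<Sum>k'\<in>{\<kappa> - 1..q - p}. ss k')"
    using rec[of "\<kappa> - 1"] IH2 by simp
  show ?case unfolding e using 1 2 by simp
qed

lemma formula: "\<kappa> \<le> q - p \<Longrightarrow> kk \<kappa> = (\<Sum>k'\<in>{\<kappa> + 1..q - p}. (k' - \<kappa>) * ss k') \<and>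
   kk (\<kappa> - 1) - kk \<kappa> = (\<Sum>k'\<in>{\<kappa>..q - p}. ss k')"
proof -
  assume "\<kappa> \<le> q - p"
  then have e: "q - p - int (nat (q - p - \<kappa>)) = \<kappa>" by simp
  show ?thesis using formula_aux[of "nat (q - p - \<kappa>)"] unfolding e .
qed

lemma sum_d: "(\<Sum>\<kappa>\<in>{0..q - p}. cdim (D \<kappa>)) = CARD('d)"
proof -
  have "kk (0 - 1) - kk 0 = (\<Sum>k'\<in>{0..q - p}. ss k')" using formula[of 0] pq by simp
  moreover have "kk (0 - 1) - kk 0 = int CARD('d)" using dstep'[of 0] by simp
  ultimately have "int (\<Sum>\<kappa>\<in>{0..q - p}. cdim (D \<kappa>)) = int CARD('d)" by (simp add: ss_def)
  then show ?thesis by linarith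
qed

end


theorem propositionB3:
  fixes p q :: int and a :: "int \<Rightarrow> complex^'d^'d::finite"
    and D :: "int \<Rightarrow> 'd seq set"
  assumes pq: "p \<le> q"
    and fred: "fredholm_l2 (Akappa p q a (- p))"
    and Dsub: "\<And>\<kappa>. csubspace (D \<kappa>)"
    and Dsum: "\<And>\<kappa>. Ker (Akappa p q a (\<kappa> - 1)) =
                 setplus (setplus (Ker (Akappa p q a \<kappa>)) (Tpow (-1) ` Ker (Akappa p q a \<kappa>))) (D \<kappa>)"
    and Dint: "\<And>\<kappa>. setplus (Ker (Akappa p q a \<kappa>)) (Tpow (-1) ` Ker (Akappa p q a \<kappa>)) \<inter> D \<kappa> = {0}"
  shows "(\<forall>\<kappa>. setplus (Ker (Akappa p q a \<kappa>)) (Tpow (-1) ` Ker (Akappa p q a \<kappa>))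
                \<subseteq> Ker (Akappa p q a (\<kappa> - 1)))
       \<and> (\<forall>\<kappa>. \<kappa> \<ge> q - p \<longrightarrow> Ker (Akappa p q a \<kappa>) = {0})
       \<and> (\<forall>\<kappa>. \<kappa> < q - p \<longrightarrow>
             is_direct_sum {(k', r::nat). \<kappa> < k' \<and> k' \<le> q - p \<and> int r < k' - \<kappa>}
               (\<lambda>(k', r). Tpow (- int r) ` D k') (Ker (Akappa p q a \<kappa>))
           \<and> int (cdim (Ker (Akappa p q a \<kappa>))) =
               (\<Sum>k'\<in>{\<kappa>+1..q-p}. (k' - \<kappa>) * int (cdim (D k'))))
       \<and> (\<forall>\<kappa>. (\<kappa> > q - p \<or> \<kappa> < 0) \<longrightarrow> cdim (D \<kappa>) = 0)
       \<and> (\<Sum>\<kappa>\<in>{0..q-p}. cdim (D \<kappa>)) = CARD('d)"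
proof -
  have loc: "setupD p q a D"
    unfolding setupD_def setupA_def setupD_axioms_def using pq fred Dsub Dsum Dint by blast
  interpret setupD p q a D by (rule loc)
  have c1: "\<forall>\<kappa>. setplus (Ker (Akappa p q a \<kappa>)) (Tpow (-1) ` Ker (Akappa p q a \<kappa>))
                \<subseteq> Ker (Akappa p q a (\<kappa> - 1))" using part0 by blast
  have c2: "\<forall>\<kappa>. \<kappa> \<ge> q - p \<longrightarrow> Ker (Akappa p q a \<kappa>) = {0}" using part1 by blast
  have c3: "\<forall>\<kappa>. \<kappa> < q - p \<longrightarrow>
             is_direct_sum {(k', r::nat). \<kappa> < k' \<and> k' \<le> q - p \<and> int r < k' - \<kappa>}
               (\<lambda>(k', r). Tpow (- int r) ` D k') (Ker (Akappa p q a \<kappa>))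
           \<and> int (cdim (Ker (Akappa p q a \<kappa>))) =
               (\<Sum>k'\<in>{\<kappa>+1..q-p}. (k' - \<kappa>) * int (cdim (D k')))"
  proof (intro allI impI conjI)
    fix \<kappa> :: int assume k: "\<kappa> < q - p"
    show "is_direct_sum {(k', r::nat). \<kappa> < k' \<and> k' \<le> q - p \<and> int r < k' - \<kappa>}
               (\<lambda>(k', r). Tpow (- int r) ` D k') (Ker (Akappa p q a \<kappa>))"
      using P_all[of \<kappa>] unfolding IIn_def UU_def .
    show "int (cdim (Ker (Akappa p q a \<kappa>))) = (\<Sum>k'\<in>{\<kappa>+1..q-p}. (k' - \<kappa>) * int (cdim (D k')))"
      using conjunct1[OF formula[of \<kappa>]] k unfolding kk_def ss_def by simp
  qed
  have c4: "\<forall>\<kappa>. (\<kappa> > q - p \<or> \<kappa> < 0) \<longrightarrow> cdim (D \<kappa>) = 0"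
    using s_out unfolding ss_def by simp
  show ?thesis using c1 c2 c3 c4 sum_d by blast
qed

end
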